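(* Let $t\ge 2$, $q\ge 1$ and $s_1,\dots,s_t\ge 3$ be integers, let $G=K_1\vee(C_{s_1}\cup\cdots\cup C_{s_t}\cup qK_2)$ have $n$ vertices, and let $H$ be a simple graph with the same $Q$-spectrum as $G$. If $n\ge 52$ or $q\ge 12$, then $G$ and $H$ have the same degree sequence.
   Context: Graphs are simple. $K_1\vee H$ adds one vertex adjacent to every vertex of $H$; $\cup$ is disjoint union; $qK_2$ is $q$ disjoint edges; $C_s$ is the cycle on $s$ vertices. The $Q$-spectrum is the multiset of eigenvalues of $Q=A+D$ (adjacency matrix plus diagonal degree matrix). *)

theory Defs
  imports "Jordan_Normal_Form.Char_Poly" "HOL-Library.Multiset"
begin

text \<open>A graph is given by its number of vertices n (vertex set {0..<n}) and an adjacency relation.\<close>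
type_synonym graph = "nat \<times> (nat \<Rightarrow> nat \<Rightarrow> bool)"

definition simple_graph :: "graph \<Rightarrow> bool" where
  "simple_graph G \<longleftrightarrow> (\<forall>i j. snd G i j \<longrightarrow> i < fst G \<and> j < fst G \<and> i \<noteq> j \<and> snd G j i)"

definition degree :: "graph \<Rightarrow> nat \<Rightarrow> nat" where
  "degree G i = card {j. j < fst G \<and> snd G i j}"

definition degree_mset :: "graph \<Rightarrow> nat multiset" where
  "degree_mset G = mset (map (degree G) [0..<fst G])"

definition Q_matrix :: "graph \<Rightarrow> real mat" where
  "Q_matrix G = mat (fst G) (fst G)
     (\<lambda>(i,j). (if snd G i j then 1 else 0) + (if i = j then real (degree G i) else 0))"

definition Q_spectrum :: "graph \<Rightarrow> real multiset" where
  "Q_spectrum G = proots (char_poly (Q_matrix G))"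

definition join_K1 :: "graph \<Rightarrow> graph" where
  "join_K1 G = (Suc (fst G), \<lambda>i j.
      (i = 0 \<and> 0 < j \<and> j \<le> fst G) \<or> (j = 0 \<and> 0 < i \<and> i \<le> fst G) \<or>
      (0 < i \<and> 0 < j \<and> snd G (i - 1) (j - 1)))"

definition disj_union :: "graph \<Rightarrow> graph \<Rightarrow> graph" where
  "disj_union G1 G2 = (fst G1 + fst G2, \<lambda>i j.
      (i < fst G1 \<and> j < fst G1 \<and> snd G1 i j) \<or>
      (fst G1 \<le> i \<and> fst G1 \<le> j \<and> snd G2 (i - fst G1) (j - fst G1)))"

definition empty_graph :: graph where
  "empty_graph = (0, \<lambda>i j. False)"

definition cycle_graph :: "nat \<Rightarrow> graph" where
  "cycle_graph s = (s, \<lambda>i j. i < s \<and> j < s \<and> (j = (i + 1) mod s \<or> i = (j + 1) mod s))"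

definition K2 :: graph where
  "K2 = (2, \<lambda>i j. i < 2 \<and> j < 2 \<and> i \<noteq> j)"

definition union_list :: "graph list \<Rightarrow> graph" where
  "union_list Gs = foldr disj_union Gs empty_graph"

end

theory Submission
  imports Defs
begin



lemma sum_delta_left: "i < (n::nat) \<Longrightarrow> (\<Sum>k = 0..<n. (if k = i then 1 else 0) * (f k::real)) = f i"
proof -
  assume i: "i < n"
  have "(\<Sum>k = 0..<n. (if k = i then 1 else 0) * (f k::real)) = (\<Sum>k = 0..<n. if k = i then f k else 0)"
    by (rule sum.cong) auto
  also have "\<dots> = f i" using i by (subst sum.delta) auto
  finally show ?thesis .
qed

lemma self_sprod_real: "(v::real vec) \<bullet> v = (\<Sum>i = 0..<dim_vec v. (v $ i)^2)"
  unfolding scalar_prod_def by (simp add: power2_eq_square)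

lemma self_sprod_pos:
  assumes "(v::real vec) \<in> carrier_vec n" "v \<noteq> 0\<^sub>v n"
  shows "v \<bullet> v > 0"
proof -
  from assms obtain i where i: "i < n" "v $ i \<noteq> 0" by (metis eq_vecI carrier_vecD index_zero_vec)
  have "(v $ i)^2 \<le> (\<Sum>k = 0..<n. (v $ k)^2)"
    by (rule member_le_sum, insert i, auto)
  moreover have "(v $ i)^2 > 0" using i by simp
  ultimately have "0 < (\<Sum>k = 0..<n. (v $ k)^2)" by linarith
  thus ?thesis using assms(1) by (simp add: self_sprod_real)
qed

lemma householder:
  fixes v :: "real vec"
  assumes v: "v \<in> carrier_vec n" and nv: "v \<bullet> v = 1" and n: "0 < n"
  shows "\<exists>W. W \<in> carrier_mat n n \<and> transpose_mat W * W = 1\<^sub>m n \<and> col W 0 = v"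
proof (cases "v = unit_vec n 0")
  case True
  then show ?thesis using n by (intro exI[of _ "1\<^sub>m n"]) (auto simp: col_one)
next
  case False
  define w where "w = unit_vec n 0 - v"
  have w: "w \<in> carrier_vec n" using v by (simp add: w_def)
  have wi: "\<And>i. i < n \<Longrightarrow> w $ i = (if i = 0 then 1 else 0) - v $ i"
    using v by (simp add: w_def unit_vec_def)
  have w0: "w \<noteq> 0\<^sub>v n"
  proof
    assume w00: "w = 0\<^sub>v n"
    have "v = unit_vec n 0"
    proof (rule eq_vecI)
      fix i assume "i < dim_vec (unit_vec n 0)" hence i: "i < n" by simp
      have "w $ i = 0" using w00 i by simp
      thus "v $ i = unit_vec n 0 $ i" using wi[OF i] i by (simp add: unit_vec_def)
    qed (use v in simp)
    with False show False by simp
  qed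
  define s where "s = w \<bullet> w"
  have spos: "s > 0" using self_sprod_pos[OF w w0] by (simp add: s_def)
  have vv: "(\<Sum>i = 0..<n. (v $ i)^2) = 1" using nv v by (simp add: self_sprod_real)
  have "s = (\<Sum>i = 0..<n. ((if i = 0 then 1 else 0) - v $ i)^2)"
    using w wi by (simp add: s_def self_sprod_real)
  also have "\<dots> = (\<Sum>i = 0..<n. (if i = 0 then 1 else 0) - 2 * (if i = 0 then v $ i else 0) + (v $ i)^2)"
    by (rule sum.cong, auto simp: power2_eq_square algebra_simps)
  also have "\<dots> = (\<Sum>i = 0..<n. (if i = 0 then 1 else 0)) - 2 * (\<Sum>i = 0..<n. (if i = 0 then v $ i else 0)) + (\<Sum>i = 0..<n. (v $ i)^2)"
    by (simp add: sum.distrib sum_subtractf sum_distrib_left[symmetric])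
  also have "\<dots> = 2 - 2 * v $ 0"
  proof -
    have d1: "(\<Sum>i = 0..<n. (if i = 0 then 1 else 0::real)) = 1" using n by (subst sum.delta) auto
    have d2: "(\<Sum>i = 0..<n. (if i = 0 then v$i else 0)) = v$0" using n by (subst sum.delta) auto
    show ?thesis unfolding d1 d2 vv by simp
  qed
  finally have s2: "s = 2 * w $ 0" using wi[OF n] by simp
  define c where "c = 2 / s"
  define W where "W = mat n n (\<lambda>(i,j). (if i = j then 1 else 0) - c * w $ i * w $ j)"
  have W: "W \<in> carrier_mat n n" by (simp add: W_def)
  have ss: "(\<Sum>k = 0..<n. w $ k * w $ k) = s" using w by (simp add: s_def scalar_prod_def)
  have cs: "c * c * s = 2 * c" using spos by (simp add: c_def field_simps power2_eq_square)
  have "transpose_mat W * W = 1\<^sub>m n"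
  proof (rule eq_matI)
    fix i j assume i: "i < dim_row (1\<^sub>m n)" and j: "j < dim_col (1\<^sub>m n)"
    hence i: "i < n" and j: "j < n" by auto
    have "(transpose_mat W * W) $$ (i, j) = (\<Sum>k = 0..<n. W $$ (k, i) * W $$ (k, j))"
      using i j W by (simp add: scalar_prod_def)
    also have "\<dots> = (\<Sum>k = 0..<n. ((if k = i then 1 else 0) - c * w $ k * w $ i) * ((if k = j then 1 else 0) - c * w $ k * w $ j))"
      by (rule sum.cong, insert i j, auto simp: W_def)
    also have "\<dots> = (\<Sum>k = 0..<n. (if k = i then 1 else 0) * ((if k = j then 1 else 0) - c * w $ k * w $ j))
         - c * w $ i * (\<Sum>k = 0..<n. (if k = j then 1 else 0) * w $ k) 
         + c * c * w $ i * w $ j * (\<Sum>k = 0..<n. w $ k * w $ k)"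
    proof -
      have "(\<Sum>k = 0..<n. ((if k = i then 1 else 0) - c * w $ k * w $ i) * ((if k = j then 1 else 0) - c * w $ k * w $ j))
        = (\<Sum>k = 0..<n. (if k = i then 1 else 0) * ((if k = j then 1 else 0) - c * w $ k * w $ j)
            - c * w $ i * ((if k = j then 1 else 0) * w $ k) + c * c * w $ i * w $ j * (w $ k * w $ k))"
        by (rule sum.cong) (simp_all add: algebra_simps)
      thus ?thesis by (simp add: sum.distrib sum_subtractf sum_distrib_left)
    qed
    also have "\<dots> = (if i = j then 1 else 0) - c * w $ i * w $ j - c * w $ i * w $ j + c * c * s * w $ i * w $ j"
      using i j by (simp add: sum_delta_left ss)
    also have "\<dots> = (if i = j then 1 else 0)"
    proof -
      have e: "c * c * s * w $ i * w $ j = 2 * (c * w $ i * w $ j)"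
      proof -
        have "c*c*s*w$i*w$j = (c*c*s) * (w$i*w$j)" by (simp only: mult.assoc)
        also have "\<dots> = (2*c)*(w$i*w$j)" by (simp only: cs)
        also have "\<dots> = 2*(c*w$i*w$j)" by (simp only: mult.assoc)
        finally show ?thesis .
      qed
      show ?thesis unfolding e by simp
    qed
    finally show "(transpose_mat W * W) $$ (i, j) = 1\<^sub>m n $$ (i, j)" using i j by simp
  qed (use W in auto)
  moreover have "col W 0 = v"
  proof (rule eq_vecI)
    fix i assume "i < dim_vec v" hence i: "i < n" using v by simp
    have "c * w $ 0 = 1" using s2 spos by (simp add: c_def)
    have "col W 0 $ i = (if i = 0 then 1 else 0) - w $ i * (c * w $ 0)" using i n W
      by (simp add: W_def col_def algebra_simps)
    hence "col W 0 $ i = (if i = 0 then 1 else 0) - w $ i" using \<open>c * w $ 0 = 1\<close> by simp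
    thus "col W 0 $ i = v $ i" using wi[OF i] by simp
  qed (use v n W in auto)
  ultimately show ?thesis using W by blast
qed



lemma herm_real:
  fixes M :: "nat \<Rightarrow> nat \<Rightarrow> real" and f :: "nat \<Rightarrow> complex"
  assumes sym: "\<And>i j. i < n \<Longrightarrow> j < n \<Longrightarrow> M i j = M j i"
    and ev: "\<And>i. i < n \<Longrightarrow> (\<Sum>j = 0..<n. of_real (M i j) * f j) = a * f i"
    and nz: "i0 < n" "f i0 \<noteq> 0"
  shows "Im a = 0"
proof -
  define s where "s = (\<Sum>i = 0..<n. cnj (f i) * (\<Sum>j = 0..<n. of_real (M i j) * f j))"
  define T where "T = (\<Sum>i = 0..<n. (Re (f i))^2 + (Im (f i))^2)"
  have "s = (\<Sum>i = 0..<n. a * (f i * cnj (f i)))"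
    unfolding s_def
  proof (rule sum.cong[OF refl])
    fix i assume "i \<in> {0..<n}" hence "i < n" by simp
    thus "cnj (f i) * (\<Sum>j = 0..<n. of_real (M i j) * f j) = a * (f i * cnj (f i))"
      by (simp only: ev) (simp add: mult_ac)
  qed
  also have "\<dots> = a * of_real T"
    unfolding T_def complex_mult_cnj by (simp add: sum_distrib_left)
  finally have s1: "s = a * of_real T" .
  have "cnj s = (\<Sum>i = 0..<n. \<Sum>j = 0..<n. f i * of_real (M i j) * cnj (f j))"
    unfolding s_def by (simp add: cnj_sum sum_distrib_left algebra_simps)
  also have "\<dots> = (\<Sum>j = 0..<n. \<Sum>i = 0..<n. f i * of_real (M i j) * cnj (f j))"
    by (rule sum.swap)
  also have "\<dots> = s"
    unfolding s_def sum_distrib_left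
    by (rule sum.cong[OF refl], rule sum.cong[OF refl], simp add: sym algebra_simps)
  finally have "cnj s = s" .
  hence "Im s = 0" by (metis complex_cnj_cancel_iff complex_cnj_complex_of_real Im_complex_of_real Reals_cnj_iff Reals_def complex_is_Real_iff)
  have "(Re (f i0))^2 + (Im (f i0))^2 > 0" using nz(2)
    by (simp add: sum_power2_gt_zero_iff complex_eq_iff)
  moreover have "(Re (f i0))^2 + (Im (f i0))^2 \<le> T" unfolding T_def
    by (rule member_le_sum, insert nz, auto)
  ultimately have Tp: "T > 0" by linarith
  have "Im s = Im a * T" unfolding s1 by simp
  with \<open>Im s = 0\<close> Tp show ?thesis by simp
qed

lemma sym_real_eigen:
  fixes A :: "real mat"
  assumes A: "A \<in> carrier_mat n n" and sym: "transpose_mat A = A" and n: "0 < n"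
  shows "\<exists>l v. v \<in> carrier_vec n \<and> v \<bullet> v = 1 \<and> A *\<^sub>v v = l \<cdot>\<^sub>v v"
proof -
  let ?Ac = "map_mat complex_of_real A"
  have Ac: "?Ac \<in> carrier_mat n n" using A by simp
  obtain as where cp: "char_poly ?Ac = (\<Prod> a \<leftarrow> as. [:-a,1:])" and len: "length as = n"
    using char_poly_factorized[OF Ac] by blast
  then obtain a rest where as: "as = a # rest" using n by (cases as) auto
  have pa: "poly (char_poly ?Ac) a = 0" unfolding cp as by simp
  hence "eigenvalue ?Ac a" using eigenvalue_root_char_poly[OF Ac] by simp
  then obtain v where ev: "eigenvector ?Ac v a" unfolding eigenvalue_def by blast
  hence v: "v \<in> carrier_vec n" "v \<noteq> 0\<^sub>v n" "?Ac *\<^sub>v v = a \<cdot>\<^sub>v v" using Ac unfolding eigenvector_def by auto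
  obtain i0 where i0: "i0 < n" "v $ i0 \<noteq> 0" using v by (metis eq_vecI carrier_vecD index_zero_vec)
  have "Im a = 0"
  proof (rule herm_real[of n "\<lambda>i j. A $$ (i,j)" "\<lambda>j. v $ j" a i0])
    fix i j assume i: "i < n" and j: "j < n"
    have "transpose_mat A $$ (i,j) = A $$ (j,i)" using i j A by simp
    thus "A $$ (i,j) = A $$ (j,i)" using sym by simp
  next
    fix i assume i: "i < n"
    have "(?Ac *\<^sub>v v) $ i = (a \<cdot>\<^sub>v v) $ i" using v(3) by simp
    moreover have "(?Ac *\<^sub>v v) $ i = (\<Sum>j = 0..<n. of_real (A $$ (i,j)) * v $ j)"
      using i A v(1) by (simp add: scalar_prod_def)
    moreover have "(a \<cdot>\<^sub>v v) $ i = a * v $ i" using i v(1) by simp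
    ultimately show "(\<Sum>j = 0..<n. of_real (A $$ (i,j)) * v $ j) = a * v $ i" by simp
  qed (use i0 in auto)
  define r where "r = Re a"
  have ar: "a = of_real r" using \<open>Im a = 0\<close> by (simp add: r_def complex_eq_iff)
  have "complex_of_real (poly (char_poly A) r) = 0"
    using pa unfolding ar of_real_hom.char_poly_hom[OF A] of_real_hom.poly_map_poly .
  hence "poly (char_poly A) r = 0" by simp
  hence "eigenvalue A r" using eigenvalue_root_char_poly[OF A] by simp
  then obtain u where "eigenvector A u r" unfolding eigenvalue_def by blast
  hence u: "u \<in> carrier_vec n" "u \<noteq> 0\<^sub>v n" "A *\<^sub>v u = r \<cdot>\<^sub>v u" using A unfolding eigenvector_def by auto
  define k where "k = 1 / sqrt (u \<bullet> u)"
  have up: "u \<bullet> u > 0" by (rule self_sprod_pos[OF u(1,2)])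
  have kk: "k * (k * (u \<bullet> u)) = 1" using up unfolding k_def
    by (simp add: field_simps)
  show ?thesis
  proof (intro exI conjI)
    show "k \<cdot>\<^sub>v u \<in> carrier_vec n" using u by simp
    show "(k \<cdot>\<^sub>v u) \<bullet> (k \<cdot>\<^sub>v u) = 1" using u(1) kk
      by (simp add: smult_scalar_prod_distrib scalar_prod_smult_distrib)
    show "A *\<^sub>v (k \<cdot>\<^sub>v u) = r \<cdot>\<^sub>v (k \<cdot>\<^sub>v u)" using u A
      by (simp add: mult_mat_vec smult_smult_assoc mult.commute)
  qed
qed



definition emb :: "real \<Rightarrow> real mat \<Rightarrow> real mat" where
  "emb c M = mat (Suc (dim_row M)) (Suc (dim_col M))
     (\<lambda>(i,j). if i = 0 \<and> j = 0 then c else if i = 0 \<or> j = 0 then 0 else M $$ (i-1, j-1))"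

lemma emb_carrier[simp]: "M \<in> carrier_mat a b \<Longrightarrow> emb c M \<in> carrier_mat (Suc a) (Suc b)"
  by (simp add: emb_def)

lemma emb_dims[simp]: "dim_row (emb c M) = Suc (dim_row M)" "dim_col (emb c M) = Suc (dim_col M)"
  by (simp_all add: emb_def)

lemma emb_index: "i < Suc (dim_row M) \<Longrightarrow> j < Suc (dim_col M) \<Longrightarrow>
   emb c M $$ (i,j) = (if i = 0 \<and> j = 0 then c else if i = 0 \<or> j = 0 then 0 else M $$ (i-1, j-1))"
  by (simp add: emb_def)

lemma emb_mult:
  assumes M: "M \<in> carrier_mat a b" and N: "N \<in> carrier_mat b d"
  shows "emb c M * emb e N = emb (c * e) (M * N)"
proof (rule eq_matI)
  fix i j assume "i < dim_row (emb (c * e) (M * N))" "j < dim_col (emb (c * e) (M * N))"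
  hence i: "i < Suc a" and j: "j < Suc d" using M N by auto
  have "(emb c M * emb e N) $$ (i,j) = (\<Sum>k = 0..<Suc b. emb c M $$ (i,k) * emb e N $$ (k,j))"
    using i j M N by (simp add: scalar_prod_def)
  also have "\<dots> = emb c M $$ (i,0) * emb e N $$ (0,j) + (\<Sum>k = 0..<b. emb c M $$ (i,Suc k) * emb e N $$ (Suc k,j))"
    by (subst sum.atLeast0_lessThan_Suc_shift) simp
  also have "\<dots> = emb (c * e) (M * N) $$ (i,j)"
  proof (cases "i = 0")
    case True
    thus ?thesis using i j M N by (cases "j = 0") (simp_all add: emb_index)
  next
    case False
    then obtain i' where i': "i = Suc i'" by (cases i) auto
    show ?thesis
    proof (cases "j = 0")
      case True
      thus ?thesis using i j M N i' by (simp add: emb_index)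
    next
      case False
      then obtain j' where j': "j = Suc j'" by (cases j) auto
      thus ?thesis using i j M N i' by (simp add: emb_index scalar_prod_def)
    qed
  qed
  finally show "(emb c M * emb e N) $$ (i,j) = emb (c * e) (M * N) $$ (i,j)" .
qed (use M N in auto)

lemma emb_transpose: "transpose_mat (emb c M) = emb c (transpose_mat M)"
  by (rule eq_matI) (auto simp: emb_index)

lemma emb_one: "emb 1 (1\<^sub>m m) = 1\<^sub>m (Suc m)"
  by (rule eq_matI) (auto simp: emb_index)

lemma emb_diag: "diagonal_mat M \<Longrightarrow> diagonal_mat (emb c M)"
  unfolding diagonal_mat_def by (auto simp: emb_index)




lemma spectral:
  fixes A :: "real mat"
  shows "A \<in> carrier_mat n n \<Longrightarrow> transpose_mat A = A \<Longrightarrow>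
    \<exists>U D. U \<in> carrier_mat n n \<and> D \<in> carrier_mat n n \<and> diagonal_mat D \<and>
          transpose_mat U * U = 1\<^sub>m n \<and> A = U * D * transpose_mat U"
proof (induction n arbitrary: A)
  case 0
  show ?case
    by (rule exI[of _ "1\<^sub>m 0"], rule exI[of _ "1\<^sub>m 0"]) (use 0 in \<open>auto intro!: eq_matI simp: diagonal_mat_def\<close>)
next
  case (Suc m A)
  let ?n = "Suc m"
  have A: "A \<in> carrier_mat ?n ?n" and sym: "transpose_mat A = A" by fact+
  obtain l v where v: "v \<in> carrier_vec ?n" "v \<bullet> v = 1" "A *\<^sub>v v = l \<cdot>\<^sub>v v"
    using sym_real_eigen[OF A sym] by auto
  obtain W where W: "W \<in> carrier_mat ?n ?n" and WtW: "transpose_mat W * W = 1\<^sub>m ?n" and cW: "col W 0 = v"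
    using householder[OF v(1,2)] by auto
  have Wt: "transpose_mat W \<in> carrier_mat ?n ?n" using W by simp
  have WWt: "W * transpose_mat W = 1\<^sub>m ?n"
    using mat_mult_left_right_inverse[OF Wt W WtW] .
  define A' where "A' = transpose_mat W * A * W"
  have A': "A' \<in> carrier_mat ?n ?n" using W A by (simp add: A'_def)
  have symA': "transpose_mat A' = A'"
  proof -
    have "transpose_mat A' = transpose_mat W * transpose_mat (transpose_mat W * A)"
      unfolding A'_def by (rule transpose_mult[of _ ?n ?n], use W A in auto)
    also have "transpose_mat (transpose_mat W * A) = transpose_mat A * W"
      using transpose_mult[of "transpose_mat W" ?n ?n A ?n] W A by simp
    also have "transpose_mat W * (transpose_mat A * W) = A'"
      unfolding sym A'_def using W A by (simp add: assoc_mult_mat[of _ ?n ?n _ ?n _ ?n])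
    finally show ?thesis .
  qed
  have "col A' 0 = (transpose_mat W * A) *\<^sub>v col W 0"
    unfolding A'_def by (rule col_mult2[of _ ?n ?n _ ?n], use W A in auto)
  also have "\<dots> = transpose_mat W *\<^sub>v (A *\<^sub>v v)" unfolding cW using W A v(1)
    by (simp add: assoc_mult_mat_vec[of _ ?n ?n _ ?n])
  also have "\<dots> = l \<cdot>\<^sub>v (transpose_mat W *\<^sub>v col W 0)" unfolding v(3) cW using W v(1)
    by (simp add: mult_mat_vec[of _ ?n ?n])
  also have "transpose_mat W *\<^sub>v col W 0 = col (transpose_mat W * W) 0"
    by (rule col_mult2[symmetric, of _ ?n ?n _ ?n], use W in auto)
  also have "\<dots> = unit_vec ?n 0" unfolding WtW by (simp add: col_one)
  finally have col0: "col A' 0 = l \<cdot>\<^sub>v unit_vec ?n 0" .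
  have Ai0: "\<And>i. i < ?n \<Longrightarrow> A' $$ (i, 0) = (if i = 0 then l else 0)"
  proof -
    fix i assume i: "i < ?n"
    have "A' $$ (i, 0) = col A' 0 $ i" using i A' by simp
    thus "A' $$ (i, 0) = (if i = 0 then l else 0)" unfolding col0 using i by (simp add: unit_vec_def)
  qed
  have A'sym: "\<And>i j. i < ?n \<Longrightarrow> j < ?n \<Longrightarrow> A' $$ (i, j) = A' $$ (j, i)"
  proof -
    fix i j assume i: "i < ?n" and j: "j < ?n"
    have "transpose_mat A' $$ (i,j) = A' $$ (j,i)" using i j A' by simp
    thus "A' $$ (i, j) = A' $$ (j, i)" using symA' by simp
  qed
  define A3 where "A3 = mat m m (\<lambda>(i,j). A' $$ (Suc i, Suc j))"
  have A3: "A3 \<in> carrier_mat m m" by (simp add: A3_def)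
  have symA3: "transpose_mat A3 = A3"
    by (rule eq_matI) (auto simp: A3_def A'sym)
  obtain U3 D3 where U3: "U3 \<in> carrier_mat m m" and D3: "D3 \<in> carrier_mat m m"
    and dD3: "diagonal_mat D3" and U3U3: "transpose_mat U3 * U3 = 1\<^sub>m m"
    and A3eq: "A3 = U3 * D3 * transpose_mat U3"
    using Suc.IH[OF A3 symA3] by blast
  have A'emb: "A' = emb l A3"
  proof (rule eq_matI)
    fix i j assume "i < dim_row (emb l A3)" "j < dim_col (emb l A3)"
    hence i: "i < ?n" and j: "j < ?n" using A3 by auto
    show "A' $$ (i, j) = emb l A3 $$ (i, j)"
    proof (cases "j = 0")
      case True thus ?thesis using i A3 Ai0 by (simp add: emb_index)
    next
      case False
      show ?thesis
      proof (cases "i = 0")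
        case True
        have "A' $$ (0, j) = A' $$ (j, 0)" using A'sym[of 0 j] j by simp
        also have "\<dots> = 0" using Ai0[OF j] False by simp
        finally show ?thesis using True j A3 False by (simp add: emb_index)
      next
        case False2: False
        then obtain i' j' where "i = Suc i'" "j = Suc j'" using False by (cases i; cases j) auto
        thus ?thesis using i j A3 by (simp add: emb_index A3_def)
      qed
    qed
  qed (use A' A3 in auto)
  define E where "E = emb 1 U3"
  have E: "E \<in> carrier_mat ?n ?n" using U3 by (simp add: E_def)
  have Et: "transpose_mat E \<in> carrier_mat ?n ?n" using E by simp
  define D where "D = emb l D3"
  have D: "D \<in> carrier_mat ?n ?n" using D3 by (simp add: D_def)
  have EtE: "transpose_mat E * E = 1\<^sub>m ?n"
    unfolding E_def emb_transpose using U3 U3U3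
    by (simp add: emb_mult[of _ m m _ m] emb_one)
  have EDEt: "E * D * transpose_mat E = A'"
    unfolding E_def D_def emb_transpose A'emb A3eq using U3 D3
    by (simp add: emb_mult[of _ m m _ m])
  define U where "U = W * E"
  have U: "U \<in> carrier_mat ?n ?n" using W E by (simp add: U_def)
  have Ut: "transpose_mat (W * E) = transpose_mat E * transpose_mat W"
    by (rule transpose_mult[OF W E])
  have "transpose_mat U * U = transpose_mat E * (transpose_mat W * W) * E"
    unfolding U_def Ut using W E Wt Et
    by (simp add: assoc_mult_mat[of _ ?n ?n _ ?n _ ?n])
  also have "\<dots> = 1\<^sub>m ?n" unfolding WtW using Et E EtE by simp
  finally have UtU: "transpose_mat U * U = 1\<^sub>m ?n" .
  have "U * D * transpose_mat U = W * (E * D * transpose_mat E) * transpose_mat W"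
    unfolding U_def Ut using W E Wt Et D
    by (simp add: assoc_mult_mat[of _ ?n ?n _ ?n _ ?n])
  also have "\<dots> = W * transpose_mat W * A * (W * transpose_mat W)"
    unfolding EDEt A'_def using W Wt A
    by (simp add: assoc_mult_mat[of _ ?n ?n _ ?n _ ?n])
  also have "\<dots> = A" unfolding WWt using A by simp
  finally have "A = U * D * transpose_mat U" ..
  moreover have "diagonal_mat D" unfolding D_def by (rule emb_diag[OF dD3])
  ultimately show ?case using U D UtU by blast
qed




definition sdec :: "nat \<Rightarrow> real mat \<Rightarrow> real mat \<Rightarrow> real mat \<Rightarrow> bool" where
  "sdec n A U D \<longleftrightarrow> A \<in> carrier_mat n n \<and> U \<in> carrier_mat n n \<and> D \<in> carrier_mat n n \<and>
     diagonal_mat D \<and> transpose_mat U * U = 1\<^sub>m n \<and> U * transpose_mat U = 1\<^sub>m n \<and>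
     A = U * D * transpose_mat U"

lemma sdec_exists:
  assumes A: "(A::real mat) \<in> carrier_mat n n" and sym: "transpose_mat A = A"
  shows "\<exists>U D. sdec n A U D"
proof -
  obtain U D where U: "U \<in> carrier_mat n n" and D: "D \<in> carrier_mat n n" and "diagonal_mat D"
    and UtU: "transpose_mat U * U = 1\<^sub>m n" and "A = U * D * transpose_mat U"
    using spectral[OF A sym] by blast
  moreover have "U * transpose_mat U = 1\<^sub>m n"
    using mat_mult_left_right_inverse[OF _ U UtU] U by simp
  ultimately show ?thesis using A unfolding sdec_def by blast
qed

lemma proots_lin_list: "proots (\<Prod>a\<leftarrow>xs. [:- a, 1:]) = mset (xs :: real list)"
proof (induction xs)
  case (Cons a xs)
  have nz: "(\<Prod>a\<leftarrow>xs. [:- a, 1:]) \<noteq> (0 :: real poly)"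
    by (auto simp: prod_list_zero_iff)
  have e: "(\<Prod>a\<leftarrow>a # xs. [:- a, 1:]) = [:- a, 1:] * (\<Prod>a\<leftarrow>xs. [:- a, 1:])" by simp
  have "proots ([:- a, 1:] * (\<Prod>a\<leftarrow>xs. [:- a, 1:])) = proots [:- a, 1:] + proots (\<Prod>a\<leftarrow>xs. [:- a, 1:])"
    by (rule proots_mult) (use nz in auto)
  hence "proots (\<Prod>a\<leftarrow>a # xs. [:- a, 1:]) = proots [:- a, 1:] + proots (\<Prod>a\<leftarrow>xs. [:- a, 1:])"
    unfolding e .
  thus ?case using Cons by (simp add: proots_linear_factor)
qed simp

lemma sdec_proots:
  assumes "sdec n A U D"
  shows "proots (char_poly A) = mset (map (\<lambda>i. D $$ (i,i)) [0..<n])"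
proof -
  from assms have A: "A \<in> carrier_mat n n" and U: "U \<in> carrier_mat n n" and D: "D \<in> carrier_mat n n"
    and dD: "diagonal_mat D" and UtU: "transpose_mat U * U = 1\<^sub>m n" and UUt: "U * transpose_mat U = 1\<^sub>m n"
    and Aeq: "A = U * D * transpose_mat U" unfolding sdec_def by auto
  have "similar_mat A D" unfolding similar_mat_def similar_mat_wit_def
    by (rule exI[of _ U], rule exI[of _ "transpose_mat U"]) (use A U D UtU UUt Aeq in auto)
  hence "char_poly A = char_poly D" by (rule char_poly_similar)
  also have "\<dots> = (\<Prod>a\<leftarrow>diag_mat D. [:- a, 1:])"
    by (rule char_poly_upper_triangular[OF D], use dD D in \<open>auto simp: upper_triangular_def diagonal_mat_def\<close>)
  finally have cp: "char_poly A = (\<Prod>a\<leftarrow>diag_mat D. [:- a, 1:])" .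
  have "proots (char_poly A) = mset (diag_mat D)" unfolding cp by (rule proots_lin_list)
  thus ?thesis using D by (simp add: diag_mat_def)
qed


lemma diag_row_sum:
  assumes D: "D \<in> carrier_mat n n" and dD: "diagonal_mat D" and k: "k < n"
  shows "(\<Sum>j = 0..<n. D $$ (k, j) * (f j :: real)) = D $$ (k,k) * f k"
proof -
  have "(\<Sum>j = 0..<n. D $$ (k, j) * f j) = (\<Sum>j = 0..<n. if j = k then D $$ (k,k) * f k else 0)"
    by (rule sum.cong, insert D dD k, auto simp: diagonal_mat_def)
  also have "\<dots> = D $$ (k,k) * f k" using k by (subst sum.delta) auto
  finally show ?thesis .
qed

lemma diag_col_sum:
  assumes D: "D \<in> carrier_mat n n" and dD: "diagonal_mat D" and k: "k < n"
  shows "(\<Sum>j = 0..<n. (f j :: real) * D $$ (j, k)) = f k * D $$ (k,k)"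
proof -
  have "(\<Sum>j = 0..<n. f j * D $$ (j, k)) = (\<Sum>j = 0..<n. if j = k then f k * D $$ (k,k) else 0)"
    by (rule sum.cong, insert D dD k, auto simp: diagonal_mat_def)
  also have "\<dots> = f k * D $$ (k,k)" using k by (subst sum.delta) auto
  finally show ?thesis .
qed

lemma sdec_form:
  assumes sd: "sdec n A U D" and x: "x \<in> carrier_vec n"
  shows "x \<bullet> (A *\<^sub>v x) = (\<Sum>k = 0..<n. D $$ (k,k) * ((transpose_mat U *\<^sub>v x) $ k)^2)"
    and "x \<bullet> x = (\<Sum>k = 0..<n. ((transpose_mat U *\<^sub>v x) $ k)^2)"
proof -
  from sd have A: "A \<in> carrier_mat n n" and U: "U \<in> carrier_mat n n" and D: "D \<in> carrier_mat n n"
    and dD: "diagonal_mat D" and UtU: "transpose_mat U * U = 1\<^sub>m n" and UUt: "U * transpose_mat U = 1\<^sub>m n"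
    and Aeq: "A = U * D * transpose_mat U" unfolding sdec_def by auto
  define z where "z = transpose_mat U *\<^sub>v x"
  have z: "z \<in> carrier_vec n" using U x by (simp add: z_def)
  have Ax: "A *\<^sub>v x = U *\<^sub>v (D *\<^sub>v z)"
    unfolding Aeq z_def using U D x
    by (simp add: assoc_mult_mat_vec[of _ n n _ n])
  have xU: "\<And>w. w \<in> carrier_vec n \<Longrightarrow> x \<bullet> (U *\<^sub>v w) = z \<bullet> w"
    unfolding z_def using transpose_vec_mult_scalar[OF U _ x] by simp
  have "x \<bullet> (A *\<^sub>v x) = z \<bullet> (D *\<^sub>v z)" unfolding Ax using D z by (simp add: xU)
  also have "\<dots> = (\<Sum>k = 0..<n. z $ k * (D $$ (k,k) * z $ k))"
    using z D by (simp add: scalar_prod_def diag_row_sum[OF D dD])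
  finally show "x \<bullet> (A *\<^sub>v x) = (\<Sum>k = 0..<n. D $$ (k,k) * ((transpose_mat U *\<^sub>v x) $ k)^2)"
    unfolding z_def[symmetric] by (simp add: power2_eq_square mult_ac)
  have "x = U *\<^sub>v z" unfolding z_def using U x
    by (simp add: assoc_mult_mat_vec[symmetric, of _ n n _ n] UUt)
  hence "x \<bullet> x = z \<bullet> z" using xU[OF z] by simp
  thus "x \<bullet> x = (\<Sum>k = 0..<n. ((transpose_mat U *\<^sub>v x) $ k)^2)"
    unfolding z_def[symmetric] using z by (simp add: scalar_prod_def power2_eq_square)
qed

lemma sdec_Uz:
  assumes sd: "sdec n A U D" and z: "z \<in> carrier_vec n"
  shows "transpose_mat U *\<^sub>v (U *\<^sub>v z) = z"
proof -
  from sd have U: "U \<in> carrier_mat n n" and UtU: "transpose_mat U * U = 1\<^sub>m n" unfolding sdec_def by auto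
  show ?thesis using U z by (simp add: assoc_mult_mat_vec[symmetric, of _ n n _ n] UtU)
qed

lemma sdec_trace:
  assumes sd: "sdec n A U D"
  shows "(\<Sum>i = 0..<n. A $$ (i,i)) = (\<Sum>k = 0..<n. D $$ (k,k))"
proof -
  from sd have A: "A \<in> carrier_mat n n" and U: "U \<in> carrier_mat n n" and D: "D \<in> carrier_mat n n"
    and dD: "diagonal_mat D" and UtU: "transpose_mat U * U = 1\<^sub>m n"
    and Aeq: "A = U * D * transpose_mat U" unfolding sdec_def by auto
  have UD: "\<And>i k. i < n \<Longrightarrow> k < n \<Longrightarrow> (U * D) $$ (i,k) = U $$ (i,k) * D $$ (k,k)"
    using U D by (simp add: scalar_prod_def diag_col_sum[OF D dD])
  have Aii: "\<And>i. i < n \<Longrightarrow> A $$ (i,i) = (\<Sum>k = 0..<n. D $$ (k,k) * (U $$ (i,k) * U $$ (i,k)))"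
    unfolding Aeq using U D by (simp add: scalar_prod_def diag_row_sum[OF D dD] mult_ac)
  have Ukk: "\<And>k. k < n \<Longrightarrow> (\<Sum>i = 0..<n. U $$ (i,k) * U $$ (i,k)) = 1"
  proof -
    fix k assume k: "k < n"
    have "(transpose_mat U * U) $$ (k,k) = (\<Sum>i = 0..<n. U $$ (i,k) * U $$ (i,k))"
      using U k by (simp add: scalar_prod_def)
    thus "(\<Sum>i = 0..<n. U $$ (i,k) * U $$ (i,k)) = 1" using UtU k by simp
  qed
  have "(\<Sum>i = 0..<n. A $$ (i,i)) = (\<Sum>i = 0..<n. \<Sum>k = 0..<n. D $$ (k,k) * (U $$ (i,k) * U $$ (i,k)))"
    by (rule sum.cong) (simp_all add: Aii)
  also have "\<dots> = (\<Sum>k = 0..<n. \<Sum>i = 0..<n. D $$ (k,k) * (U $$ (i,k) * U $$ (i,k)))"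
    by (rule sum.swap)
  also have "\<dots> = (\<Sum>k = 0..<n. D $$ (k,k))"
    by (rule sum.cong) (simp_all add: sum_distrib_left[symmetric] Ukk)
  finally show ?thesis .
qed

lemma sdec_sq:
  assumes sd: "sdec n A U D"
  shows "sdec n (A * A) U (D * D)" and "\<And>k. k < n \<Longrightarrow> (D * D) $$ (k,k) = (D $$ (k,k))^2"
proof -
  from sd have A: "A \<in> carrier_mat n n" and U: "U \<in> carrier_mat n n" and D: "D \<in> carrier_mat n n"
    and dD: "diagonal_mat D" and UtU: "transpose_mat U * U = 1\<^sub>m n" and UUt: "U * transpose_mat U = 1\<^sub>m n"
    and Aeq: "A = U * D * transpose_mat U" unfolding sdec_def by auto
  have Ut: "transpose_mat U \<in> carrier_mat n n" using U by simp
  have DDi: "\<And>i j. i < n \<Longrightarrow> j < n \<Longrightarrow> (D * D) $$ (i,j) = D $$ (i,i) * D $$ (i,j)"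
    using D by (simp add: scalar_prod_def diag_row_sum[OF D dD])
  show "\<And>k. k < n \<Longrightarrow> (D * D) $$ (k,k) = (D $$ (k,k))^2" using DDi by (simp add: power2_eq_square)
  have dDD: "diagonal_mat (D * D)" using DDi dD D unfolding diagonal_mat_def by auto
  have "A * A = U * D * (transpose_mat U * U) * D * transpose_mat U"
    unfolding Aeq using U D Ut by (simp add: assoc_mult_mat[of _ n n _ n _ n])
  also have "\<dots> = U * (D * D) * transpose_mat U"
    unfolding UtU using U D Ut by (simp add: assoc_mult_mat[of _ n n _ n _ n])
  finally show "sdec n (A * A) U (D * D)" unfolding sdec_def using A U D dDD UtU UUt by auto
qed




lemma size_filter_idx:
  "size (filter_mset P (mset (map f [0..<n]))) = card {k. k < n \<and> P (f k)}"
proof -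
  have "size (filter_mset P (mset (map f [0..<n]))) = length (filter (P \<circ> f) [0..<n])"
    unfolding mset_filter[symmetric] size_mset filter_map length_map ..
  also have "\<dots> = card {i. i < n \<and> P (f ([0..<n] ! i))}"
    by (simp add: length_filter_conv_card)
  also have "{i. i < n \<and> P (f ([0..<n] ! i))} = {k. k < n \<and> P (f k)}" by auto
  finally show ?thesis .
qed

lemma sum_two:
  assumes "finite A" "k \<in> A" "l \<in> A" "k \<noteq> l" "\<And>j. j \<in> A \<Longrightarrow> j \<noteq> k \<Longrightarrow> j \<noteq> l \<Longrightarrow> g j = 0"
  shows "sum g A = g k + (g l :: real)"
proof -
  have "sum g A = sum g {k, l}"
    by (rule sum.mono_neutral_right, use assms in auto)
  thus ?thesis using assms(4) by simp
qed

lemma sum_mset_map_upt: "sum_mset (mset (map f [0..<n])) = (\<Sum>i = 0..<n. (f i :: real))"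
  by (induction n) auto

lemma spec_size: "sdec n A U D \<Longrightarrow> size (proots (char_poly A)) = n"
  by (simp add: sdec_proots)

lemma spec_sum: "sdec n A U D \<Longrightarrow> sum_mset (proots (char_poly A)) = (\<Sum>i = 0..<n. A $$ (i,i))"
proof -
  assume sd: "sdec n A U D"
  show ?thesis unfolding sdec_proots[OF sd] sum_mset_map_upt using sdec_trace[OF sd] by simp
qed

lemma spec_sum_sq: "sdec n A U D \<Longrightarrow>
   sum_mset (image_mset (\<lambda>a. a^2) (proots (char_poly A))) = (\<Sum>i = 0..<n. (A * A) $$ (i,i))"
proof -
  assume sd: "sdec n A U D"
  have "sum_mset (image_mset (\<lambda>a. a^2) (proots (char_poly A))) = (\<Sum>k = 0..<n. (D $$ (k,k))^2)"
    unfolding sdec_proots[OF sd] mset_map[symmetric] map_map sum_mset_map_upt by (simp add: o_def)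
  also have "\<dots> = (\<Sum>k = 0..<n. (D * D) $$ (k,k))"
    by (rule sum.cong) (simp_all add: sdec_sq(2)[OF sd])
  also have "\<dots> = (\<Sum>i = 0..<n. (A * A) $$ (i,i))"
    using sdec_trace[OF sdec_sq(1)[OF sd]] by simp
  finally show ?thesis .
qed

lemma spec_upper:
  assumes sd: "sdec n A U D" and bnd: "\<And>x. x \<in> carrier_vec n \<Longrightarrow> x \<bullet> (A *\<^sub>v x) \<le> c * (x \<bullet> x)"
    and a: "a \<in># proots (char_poly A)"
  shows "a \<le> c"
proof -
  from a sd obtain k where k: "k < n" and ak: "a = D $$ (k,k)" by (auto simp: sdec_proots)
  from sd have U: "U \<in> carrier_mat n n" unfolding sdec_def by auto
  define x where "x = U *\<^sub>v unit_vec n k"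
  have x: "x \<in> carrier_vec n" using U by (simp add: x_def)
  have z: "transpose_mat U *\<^sub>v x = unit_vec n k" unfolding x_def by (rule sdec_Uz[OF sd], simp)
  have "x \<bullet> (A *\<^sub>v x) = (\<Sum>j = 0..<n. D $$ (j,j) * ((unit_vec n k) $ j)^2)"
    using sdec_form(1)[OF sd x] z by simp
  also have "\<dots> = (\<Sum>j = 0..<n. if j = k then D $$ (k,k) else 0)"
    by (rule sum.cong) (auto simp: unit_vec_def)
  also have "\<dots> = a" using k ak by (subst sum.delta) auto
  finally have e1: "x \<bullet> (A *\<^sub>v x) = a" .
  have "x \<bullet> x = (\<Sum>j = 0..<n. ((unit_vec n k) $ j)^2)"
    using sdec_form(2)[OF sd x] z by simp
  also have "\<dots> = (\<Sum>j = 0..<n. if j = k then 1 else 0)"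
    by (rule sum.cong) (auto simp: unit_vec_def)
  also have "\<dots> = 1" using k by (subst sum.delta) auto
  finally have e2: "x \<bullet> x = 1" .
  show ?thesis using bnd[OF x] e1 e2 by simp
qed

lemma spec_lower:
  assumes sd: "sdec n A U D" and x: "x \<in> carrier_vec n" and xp: "x \<bullet> x > 0"
    and bnd: "x \<bullet> (A *\<^sub>v x) \<ge> c * (x \<bullet> x)"
  shows "\<exists>a \<in># proots (char_poly A). a \<ge> c"
proof (rule ccontr)
  assume neg: "\<not> ?thesis"
  have lt: "\<And>k. k < n \<Longrightarrow> D $$ (k,k) < c"
  proof -
    fix k assume "k < n"
    hence "D $$ (k,k) \<in># proots (char_poly A)" using sd by (simp add: sdec_proots)
    with neg show "D $$ (k,k) < c" by (meson not_le)
  qed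
  define z where "z = transpose_mat U *\<^sub>v x"
  have f1: "x \<bullet> (A *\<^sub>v x) = (\<Sum>k = 0..<n. D $$ (k,k) * (z $ k)^2)" using sdec_form(1)[OF sd x] z_def by simp
  have f2: "x \<bullet> x = (\<Sum>k = 0..<n. (z $ k)^2)" using sdec_form(2)[OF sd x] z_def by simp
  obtain k where k: "k < n" "z $ k \<noteq> 0"
  proof (rule ccontr)
    assume "\<not> thesis"
    hence "\<And>k. k < n \<Longrightarrow> z $ k = 0" using that by blast
    hence "x \<bullet> x = 0" unfolding f2 by simp
    with xp show False by simp
  qed
  have "0 < (\<Sum>j = 0..<n. (c - D $$ (j,j)) * (z $ j)^2)"
    by (rule sum_pos2[of _ k]) (use k lt in \<open>auto intro!: mult_nonneg_nonneg simp: less_imp_le\<close>)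
  also have "\<dots> = c * (x \<bullet> x) - x \<bullet> (A *\<^sub>v x)"
    unfolding f1 f2 by (simp add: algebra_simps sum_subtractf sum_distrib_left)
  finally show False using bnd by simp
qed


lemma form_diff:
  assumes sd: "sdec n A U D" and x: "x \<in> carrier_vec n"
  shows "x \<bullet> (A *\<^sub>v x) - c * (x \<bullet> x) = (\<Sum>j = 0..<n. (D $$ (j,j) - c) * ((transpose_mat U *\<^sub>v x) $ j)^2)"
  unfolding sdec_form[OF sd x] by (simp add: algebra_simps sum_subtractf sum_distrib_left)

lemma spec_hyper:
  assumes sd: "sdec n A U D" and p: "p < n"
    and bnd: "\<And>x. x \<in> carrier_vec n \<Longrightarrow> x $ p = 0 \<Longrightarrow> x \<bullet> (A *\<^sub>v x) \<le> c * (x \<bullet> x)"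
  shows "size (filter_mset (\<lambda>a. c < a) (proots (char_poly A))) \<le> 1"
proof -
  from sd have U: "U \<in> carrier_mat n n" unfolding sdec_def by auto
  let ?S = "{k. k < n \<and> c < D $$ (k,k)}"
  have "card ?S \<le> Suc 0" unfolding card_le_Suc0_iff_eq[OF finite_Collect_conjI[OF disjI1[OF finite_Collect_less_nat]]]
  proof (intro ballI, rule ccontr)
    fix k l assume k: "k \<in> ?S" and l: "l \<in> ?S" and kl: "k \<noteq> l"
    define \<alpha> where "\<alpha> = U $$ (p, l)"
    define \<beta> where "\<beta> = - U $$ (p, k)"
    define z where "z = (if \<alpha> = 0 \<and> \<beta> = 0 then unit_vec n k else vec n (\<lambda>j. if j = k then \<alpha> else if j = l then \<beta> else 0))"
    have z: "z \<in> carrier_vec n" by (simp add: z_def)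
    have kn: "k < n" and ln: "l < n" using k l by auto
    have zsupp: "\<And>j. j < n \<Longrightarrow> j \<noteq> k \<Longrightarrow> j \<noteq> l \<Longrightarrow> z $ j = 0"
      by (auto simp: z_def unit_vec_def)
    obtain j0 where j0: "j0 < n" "z $ j0 \<noteq> 0" "j0 = k \<or> j0 = l"
    proof (cases "\<alpha> = 0 \<and> \<beta> = 0")
      case True thus ?thesis using that[of k] kn by (simp add: z_def)
    next
      case False
      show ?thesis
      proof (cases "\<alpha> = 0")
        case True thus ?thesis using that[of l] ln kl False by (simp add: z_def)
      next
        case False thus ?thesis using that[of k] kn by (simp add: z_def)
      qed
    qed
    define x where "x = U *\<^sub>v z"
    have x: "x \<in> carrier_vec n" unfolding x_def by (rule mult_mat_vec_carrier[OF U z])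
    have zx: "transpose_mat U *\<^sub>v x = z" unfolding x_def by (rule sdec_Uz[OF sd z])
    have "x $ p = row U p \<bullet> z" using U p by (simp add: x_def)
    also have "\<dots> = 0"
    proof (cases "\<alpha> = 0 \<and> \<beta> = 0")
      case True
      hence "row U p \<bullet> z = row U p $ k" using U kn by (simp add: z_def scalar_prod_right_unit)
      thus ?thesis using True U kn p by (simp add: \<beta>_def)
    next
      case False
      have "row U p \<bullet> z = (\<Sum>j \<in> {0..<n}. U $$ (p, j) * z $ j)" using U p z by (simp add: scalar_prod_def)
      also have "\<dots> = U $$ (p, k) * z $ k + U $$ (p, l) * z $ l"
        by (rule sum_two, use kn ln kl zsupp in auto)
      also have "\<dots> = 0" using False kn ln kl by (simp add: z_def \<alpha>_def \<beta>_def)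
      finally show ?thesis .
    qed
    finally have xp: "x $ p = 0" .
    have "0 < (\<Sum>j = 0..<n. (D $$ (j,j) - c) * (z $ j)^2)"
    proof (rule sum_pos2[of _ j0])
      show "0 < (D $$ (j0,j0) - c) * (z $ j0)^2" using j0 k l by auto
    next
      fix j assume "j \<in> {0..<n}"
      hence j: "j < n" by simp
      show "0 \<le> (D $$ (j,j) - c) * (z $ j)^2"
      proof (cases "j = k \<or> j = l")
        case True thus ?thesis using k l by auto
      next
        case False thus ?thesis using zsupp[OF j] by auto
      qed
    qed (use j0 in auto)
    also have "\<dots> = x \<bullet> (A *\<^sub>v x) - c * (x \<bullet> x)" using form_diff[OF sd x, of c] zx by simp
    finally show False using bnd[OF x xp] by simp
  qed
  thus ?thesis unfolding sdec_proots[OF sd] size_filter_idx by simp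
qed

lemma spec_two:
  assumes sd: "sdec n A U D" and small: "size (filter_mset (\<lambda>a. c < a) (proots (char_poly A))) \<le> 1"
    and u: "u < n" and v: "v < n" and uv: "u \<noteq> v"
  shows "\<exists>x \<in> carrier_vec n. x \<bullet> x > 0 \<and> (\<forall>j<n. j \<noteq> u \<longrightarrow> j \<noteq> v \<longrightarrow> x $ j = 0) \<and> x \<bullet> (A *\<^sub>v x) \<le> c * (x \<bullet> x)"
proof -
  from sd have U: "U \<in> carrier_mat n n" unfolding sdec_def by auto
  let ?S = "{k. k < n \<and> c < D $$ (k,k)}"
  have "card ?S \<le> Suc 0" using small unfolding sdec_proots[OF sd] size_filter_idx by simp
  hence uniq: "\<And>k l. k \<in> ?S \<Longrightarrow> l \<in> ?S \<Longrightarrow> k = l"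
    unfolding card_le_Suc0_iff_eq[OF finite_Collect_conjI[OF disjI1[OF finite_Collect_less_nat]]] by blast
  have good: "x \<bullet> (A *\<^sub>v x) \<le> c * (x \<bullet> x)"
    if x: "x \<in> carrier_vec n" and zS: "\<And>k. k \<in> ?S \<Longrightarrow> (transpose_mat U *\<^sub>v x) $ k = 0" for x
  proof -
    have "(\<Sum>j = 0..<n. (D $$ (j,j) - c) * ((transpose_mat U *\<^sub>v x) $ j)^2) \<le> 0"
    proof (rule sum_nonpos)
      fix j assume "j \<in> {0..<n}" hence j: "j < n" by simp
      show "(D $$ (j,j) - c) * ((transpose_mat U *\<^sub>v x) $ j)^2 \<le> 0"
      proof (cases "j \<in> ?S")
        case True thus ?thesis using zS by simp
      next
        case False thus ?thesis using j by (auto intro: mult_nonpos_nonneg)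
      qed
    qed
    thus ?thesis using form_diff[OF sd x, of c] by simp
  qed
  have "(unit_vec n u :: real vec) \<bullet> unit_vec n u = 1" using u by (simp add: scalar_prod_right_unit)
  hence unit_ok: "(unit_vec n u :: real vec) \<bullet> unit_vec n u > 0" by simp
  have unit_supp: "\<forall>j<n. j \<noteq> u \<longrightarrow> j \<noteq> v \<longrightarrow> unit_vec n u $ j = 0" by (auto simp: unit_vec_def)
  show ?thesis
  proof (cases "?S = {}")
    case True
    thus ?thesis using good[of "unit_vec n u"] unit_ok unit_supp by (intro bexI[of _ "unit_vec n u"]) auto
  next
    case False
    then obtain k0 where k0: "k0 \<in> ?S" by blast
    hence k0n: "k0 < n" by simp
    define a where "a = U $$ (v, k0)"
    define b where "b = - U $$ (u, k0)"
    define x where "x = (if a = 0 \<and> b = 0 then unit_vec n u else vec n (\<lambda>j. if j = u then a else if j = v then b else 0))"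
    have x: "x \<in> carrier_vec n" by (simp add: x_def)
    have xsupp: "\<forall>j<n. j \<noteq> u \<longrightarrow> j \<noteq> v \<longrightarrow> x $ j = 0" by (auto simp: x_def unit_vec_def)
    have zk0: "(transpose_mat U *\<^sub>v x) $ k0 = 0"
    proof -
      have "(transpose_mat U *\<^sub>v x) $ k0 = (\<Sum>i \<in> {0..<n}. U $$ (i, k0) * x $ i)"
        using U k0n x by (simp add: scalar_prod_def)
      also have "\<dots> = U $$ (u, k0) * x $ u + U $$ (v, k0) * x $ v"
        by (rule sum_two, use u v uv xsupp in auto)
      also have "\<dots> = 0"
        using u v uv by (cases "a = 0 \<and> b = 0") (auto simp: x_def a_def b_def)
      finally show ?thesis .
    qed
    have "x \<bullet> (A *\<^sub>v x) \<le> c * (x \<bullet> x)"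
      by (rule good[OF x]) (use uniq k0 zk0 in blast)
    moreover have "x \<bullet> x > 0"
    proof (rule self_sprod_pos[OF x])
      show "x \<noteq> 0\<^sub>v n"
      proof
        assume x0: "x = 0\<^sub>v n"
        show False
        proof (cases "a = 0 \<and> b = 0")
          case True
          hence "x $ u = 1" using u by (simp add: x_def)
          thus False using x0 u by simp
        next
          case False
          hence "x $ u \<noteq> 0 \<or> x $ v \<noteq> 0" using u v uv by (auto simp: x_def)
          thus False using x0 u v by auto
        qed
      qed
    qed
    ultimately show ?thesis using x xsupp by blast
  qed
qed




definition adj :: "graph \<Rightarrow> nat \<Rightarrow> nat \<Rightarrow> real" where
  "adj G i j = (if snd G i j then 1 else 0)"

lemma Q_carrier: "Q_matrix G \<in> carrier_mat (fst G) (fst G)"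
  by (simp add: Q_matrix_def)

lemma Q_index: "i < fst G \<Longrightarrow> j < fst G \<Longrightarrow>
  Q_matrix G $$ (i,j) = adj G i j + (if i = j then real (degree G i) else 0)"
  by (simp add: Q_matrix_def adj_def)

lemma degree_sum: "real (degree G i) = (\<Sum>j = 0..<fst G. adj G i j)"
proof -
  have "(\<Sum>j = 0..<fst G. adj G i j) = real (card ({0..<fst G} \<inter> {j. snd G i j}))"
    unfolding adj_def by (simp add: sum.If_cases)
  also have "{0..<fst G} \<inter> {j. snd G i j} = {j. j < fst G \<and> snd G i j}" by auto
  finally show ?thesis by (simp add: degree_def)
qed

lemma adj_nonneg: "0 \<le> adj G i j" by (simp add: adj_def)
lemma adj_le1: "adj G i j \<le> 1" by (simp add: adj_def)
lemma adj_sq: "adj G i j * adj G i j = adj G i j" by (simp add: adj_def)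

lemma Q_form:
  assumes x: "x \<in> carrier_vec (fst G)"
  shows "x \<bullet> (Q_matrix G *\<^sub>v x) = (\<Sum>i = 0..<fst G. real (degree G i) * (x $ i)^2)
     + (\<Sum>i = 0..<fst G. \<Sum>j = 0..<fst G. adj G i j * x $ i * x $ j)"
proof -
  let ?n = "fst G"
  have row: "\<And>i. i < ?n \<Longrightarrow> (Q_matrix G *\<^sub>v x) $ i = (\<Sum>j = 0..<?n. adj G i j * x $ j) + real (degree G i) * x $ i"
  proof -
    fix i assume i: "i < ?n"
    have "(Q_matrix G *\<^sub>v x) $ i = (\<Sum>j = 0..<?n. (adj G i j + (if i = j then real (degree G i) else 0)) * x $ j)"
      using i x Q_carrier[of G] by (simp add: scalar_prod_def Q_index)
    also have "\<dots> = (\<Sum>j = 0..<?n. adj G i j * x $ j) + (\<Sum>j = 0..<?n. (if j = i then real (degree G i) * x $ j else 0))"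
    proof -
      have "(\<Sum>j = 0..<?n. (adj G i j + (if i = j then real (degree G i) else 0)) * x $ j)
          = (\<Sum>j = 0..<?n. adj G i j * x $ j + (if j = i then real (degree G i) * x $ j else 0))"
        by (rule sum.cong) (auto simp: algebra_simps)
      thus ?thesis by (simp only: sum.distrib)
    qed
    also have "(\<Sum>j = 0..<?n. (if j = i then real (degree G i) * x $ j else 0)) = real (degree G i) * x $ i"
      using i by (subst sum.delta) auto
    finally show "(Q_matrix G *\<^sub>v x) $ i = (\<Sum>j = 0..<?n. adj G i j * x $ j) + real (degree G i) * x $ i" .
  qed
  have "x \<bullet> (Q_matrix G *\<^sub>v x) = (\<Sum>i = 0..<?n. x $ i * ((\<Sum>j = 0..<?n. adj G i j * x $ j) + real (degree G i) * x $ i))"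
  proof -
    have "x \<bullet> (Q_matrix G *\<^sub>v x) = (\<Sum>i = 0..<?n. x $ i * (Q_matrix G *\<^sub>v x) $ i)"
      unfolding scalar_prod_def using Q_carrier[of G] by simp
    also have "\<dots> = (\<Sum>i = 0..<?n. x $ i * ((\<Sum>j = 0..<?n. adj G i j * x $ j) + real (degree G i) * x $ i))"
      by (rule sum.cong[OF refl]) (simp add: row)
    finally show ?thesis .
  qed
  also have "\<dots> = (\<Sum>i = 0..<?n. real (degree G i) * (x $ i)^2) + (\<Sum>i = 0..<?n. \<Sum>j = 0..<?n. adj G i j * x $ i * x $ j)"
    by (simp add: sum.distrib sum_distrib_left algebra_simps power2_eq_square)
  finally show ?thesis .
qed

lemma Q_sym:
  assumes "\<And>i j. snd G i j = snd G j i"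
  shows "transpose_mat (Q_matrix G) = Q_matrix G"
  by (rule eq_matI) (auto simp: Q_matrix_def assms)

lemma Q_trace:
  assumes "\<And>i. \<not> snd G i i"
  shows "(\<Sum>i = 0..<fst G. Q_matrix G $$ (i,i)) = (\<Sum>i = 0..<fst G. real (degree G i))"
  by (rule sum.cong) (auto simp: Q_index adj_def assms)

lemma Q_sq_trace:
  assumes sym: "\<And>i j. snd G i j = snd G j i" and irr: "\<And>i. \<not> snd G i i"
  shows "(\<Sum>i = 0..<fst G. (Q_matrix G * Q_matrix G) $$ (i,i)) =
     (\<Sum>i = 0..<fst G. (real (degree G i))^2) + (\<Sum>i = 0..<fst G. real (degree G i))"
proof -
  let ?n = "fst G"
  have "(\<Sum>i = 0..<?n. (Q_matrix G * Q_matrix G) $$ (i,i)) = (\<Sum>i = 0..<?n. (real (degree G i))^2 + real (degree G i))"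
  proof (rule sum.cong[OF refl])
    fix i assume "i \<in> {0..<?n}" hence i: "i < ?n" by simp
    have "(Q_matrix G * Q_matrix G) $$ (i,i) = (\<Sum>j = 0..<?n. Q_matrix G $$ (i,j) * Q_matrix G $$ (j,i))"
      using i Q_carrier[of G] by (simp add: scalar_prod_def)
    also have "\<dots> = (\<Sum>j = 0..<?n. adj G i j + (if j = i then (real (degree G i))^2 else 0))"
      by (rule sum.cong[OF refl], insert i, auto simp: Q_index adj_def sym irr power2_eq_square)
    also have "\<dots> = (real (degree G i))^2 + real (degree G i)"
      using i by (simp add: sum.distrib degree_sum)
    finally show "(Q_matrix G * Q_matrix G) $$ (i,i) = (real (degree G i))^2 + real (degree G i)" .
  qed
  thus ?thesis by (simp add: sum.distrib)
qed

lemma weighted_bound: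
  fixes a :: "nat \<Rightarrow> nat \<Rightarrow> real" and w x :: "nat \<Rightarrow> real"
  assumes sym: "\<And>i j. i < n \<Longrightarrow> j < n \<Longrightarrow> a i j = a j i" and nn: "\<And>i j. 0 \<le> a i j"
    and wpos: "\<And>i. 0 < w i"
  shows "(\<Sum>i = 0..<n. \<Sum>j = 0..<n. a i j * x i * x j) \<le> (\<Sum>i = 0..<n. (\<Sum>j = 0..<n. a i j * w j / w i) * (x i)^2)"
proof -
  have pt: "a i j * x i * x j \<le> (a i j * (w j / w i) * (x i)^2 + a i j * (w i / w j) * (x j)^2) / 2" for i j
  proof -
    have wi: "w i > 0" and wj: "w j > 0" using wpos by auto
    have "(w j / w i) * (x i)^2 + (w i / w j) * (x j)^2 - 2 * x i * x j = (w j * x i - w i * x j)^2 / (w i * w j)"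
      using wi wj by (simp add: field_simps power2_eq_square)
    also have "\<dots> \<ge> 0" using wi wj by simp
    finally have "2 * x i * x j \<le> (w j / w i) * (x i)^2 + (w i / w j) * (x j)^2" by simp
    from mult_left_mono[OF this nn[of i j]] show ?thesis by (simp add: algebra_simps)
  qed
  have "(\<Sum>i = 0..<n. \<Sum>j = 0..<n. a i j * x i * x j) \<le>
      (\<Sum>i = 0..<n. \<Sum>j = 0..<n. (a i j * (w j / w i) * (x i)^2 + a i j * (w i / w j) * (x j)^2) / 2)"
    by (intro sum_mono pt)
  also have "\<dots> = ((\<Sum>i = 0..<n. \<Sum>j = 0..<n. a i j * (w j / w i) * (x i)^2) + (\<Sum>i = 0..<n. \<Sum>j = 0..<n. a i j * (w i / w j) * (x j)^2)) / 2"
    by (simp only: sum_divide_distrib[symmetric] sum.distrib)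
  also have "(\<Sum>i = 0..<n. \<Sum>j = 0..<n. a i j * (w i / w j) * (x j)^2) = (\<Sum>j = 0..<n. \<Sum>i = 0..<n. a i j * (w i / w j) * (x j)^2)"
    by (rule sum.swap)
  also have "\<dots> = (\<Sum>i = 0..<n. \<Sum>j = 0..<n. a i j * (w j / w i) * (x i)^2)"
    by (rule sum.cong[OF refl], rule sum.cong[OF refl], simp add: sym)
  also have "((\<Sum>i = 0..<n. \<Sum>j = 0..<n. a i j * (w j / w i) * (x i)^2) + (\<Sum>i = 0..<n. \<Sum>j = 0..<n. a i j * (w j / w i) * (x i)^2)) / 2
     = (\<Sum>i = 0..<n. (\<Sum>j = 0..<n. a i j * w j / w i) * (x i)^2)"
    by (simp add: sum_distrib_right)
  finally show ?thesis .
qed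




lemma sq_form: "(x :: real vec) \<in> carrier_vec n \<Longrightarrow> x \<bullet> x = (\<Sum>i = 0..<n. (x $ i)^2)"
proof -
  assume "x \<in> carrier_vec n"
  hence "dim_vec x = n" by auto
  thus ?thesis by (simp add: self_sprod_real)
qed

lemma H_all_small:
  assumes sym: "\<And>i j. snd H i j = snd H j i" and small: "\<And>i. i < fst H \<Longrightarrow> degree H i \<le> 6"
    and x: "x \<in> carrier_vec (fst H)"
  shows "x \<bullet> (Q_matrix H *\<^sub>v x) \<le> 12 * (x \<bullet> x)"
proof -
  let ?n = "fst H"
  have "(\<Sum>i = 0..<?n. \<Sum>j = 0..<?n. adj H i j * x $ i * x $ j)
      \<le> (\<Sum>i = 0..<?n. (\<Sum>j = 0..<?n. adj H i j * 1 / 1) * (x $ i)^2)"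
    by (rule weighted_bound[where w = "\<lambda>_. 1"]) (auto simp: adj_def sym)
  also have "\<dots> = (\<Sum>i = 0..<?n. real (degree H i) * (x $ i)^2)"
    by (simp add: degree_sum)
  finally have le: "(\<Sum>i = 0..<?n. \<Sum>j = 0..<?n. adj H i j * x $ i * x $ j) \<le> (\<Sum>i = 0..<?n. real (degree H i) * (x $ i)^2)" .
  have "x \<bullet> (Q_matrix H *\<^sub>v x) \<le> (\<Sum>i = 0..<?n. real (degree H i) * (x $ i)^2) + (\<Sum>i = 0..<?n. real (degree H i) * (x $ i)^2)"
    unfolding Q_form[OF x] using le by linarith
  also have "\<dots> = (\<Sum>i = 0..<?n. 2 * real (degree H i) * (x $ i)^2)"
    by (simp add: sum.distrib[symmetric] algebra_simps)
  finally have "x \<bullet> (Q_matrix H *\<^sub>v x) \<le> (\<Sum>i = 0..<?n. 2 * real (degree H i) * (x $ i)^2)" .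
  also have "\<dots> \<le> (\<Sum>i = 0..<?n. 12 * (x $ i)^2)"
    by (rule sum_mono, rule mult_right_mono) (use small in auto)
  also have "\<dots> = 12 * (x \<bullet> x)" using x by (simp add: sq_form sum_distrib_left)
  finally show ?thesis .
qed

lemma hub_arith:
  fixes m :: real assumes m: "m \<ge> 24"
  shows "(m - 2) * (1 + 1 / (m - 1/4 - 11)) \<le> m - 1/4"
proof -
  have pos: "m - 1/4 - 11 > 0" using m by simp
  have e: "(m - 1/4) * (m - 1/4 - 11) - (m - 2) * (m - 1/4 - 10) = 3/4 * m - 283/16"
    by (simp add: field_simps)
  have "(m - 2) * (m - 1/4 - 10) \<le> (m - 1/4) * (m - 1/4 - 11)" using e m by linarith
  moreover have "(m - 2) * (1 + 1 / (m - 1/4 - 11)) = (m - 2) * (m - 1/4 - 10) / (m - 1/4 - 11)"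
    using pos by (simp add: field_simps)
  ultimately show ?thesis using pos by (simp add: pos_divide_le_eq)
qed

lemma H_hub:
  assumes sym: "\<And>i j. snd H i j = snd H j i" and irr: "\<And>i. \<not> snd H i i"
    and h: "h < fst H" and dh: "real (degree H h) \<le> real (fst H) - 2"
    and small: "\<And>i. i < fst H \<Longrightarrow> i \<noteq> h \<Longrightarrow> degree H i \<le> 6"
    and n24: "fst H \<ge> 24"
    and x: "x \<in> carrier_vec (fst H)"
  shows "x \<bullet> (Q_matrix H *\<^sub>v x) \<le> (real (fst H) - 1/4) * (x \<bullet> x)"
proof -
  let ?n = "fst H"
  define c where "c = real ?n - 1/4"
  define e where "e = 1 / (c - 11)"
  have cpos: "c - 11 > 0" using n24 by (simp add: c_def)
  have c12: "c \<ge> 12" using n24 by (simp add: c_def)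
  have epos: "e > 0" using cpos by (simp add: e_def)
  have ie: "1 / e = c - 11" using cpos by (simp add: e_def)
  define w where "w = (\<lambda>j. if j = h then 1 else e)"
  have wpos: "\<And>j. w j > 0" using epos by (simp add: w_def)
  have wsum: "\<And>i. (\<Sum>j = 0..<?n. adj H i j * w j) = e * real (degree H i) + (1 - e) * adj H i h"
  proof -
    fix i
    have "(\<Sum>j = 0..<?n. adj H i j * w j) = (\<Sum>j = 0..<?n. e * adj H i j + (if j = h then (1 - e) * adj H i h else 0))"
      by (rule sum.cong) (auto simp: w_def algebra_simps)
    also have "\<dots> = e * real (degree H i) + (1 - e) * adj H i h"
      using h by (simp add: sum.distrib sum_distrib_left[symmetric] degree_sum)
    finally show "(\<Sum>j = 0..<?n. adj H i j * w j) = e * real (degree H i) + (1 - e) * adj H i h" .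
  qed
  have "(\<Sum>i = 0..<?n. \<Sum>j = 0..<?n. adj H i j * x $ i * x $ j)
      \<le> (\<Sum>i = 0..<?n. (\<Sum>j = 0..<?n. adj H i j * w j / w i) * (x $ i)^2)"
    by (rule weighted_bound[OF _ adj_nonneg wpos]) (auto simp: adj_def sym)
  hence "x \<bullet> (Q_matrix H *\<^sub>v x) \<le> (\<Sum>i = 0..<?n. (real (degree H i) + (\<Sum>j = 0..<?n. adj H i j * w j / w i)) * (x $ i)^2)"
    unfolding Q_form[OF x] by (simp add: sum.distrib algebra_simps)
  also have "\<dots> \<le> (\<Sum>i = 0..<?n. c * (x $ i)^2)"
  proof (rule sum_mono, rule mult_right_mono)
    fix i assume "i \<in> {0..<?n}" hence i: "i < ?n" by simp
    have ws: "(\<Sum>j = 0..<?n. adj H i j * w j / w i) = (e * real (degree H i) + (1 - e) * adj H i h) / w i"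
      by (simp add: sum_divide_distrib[symmetric] wsum)
    show "real (degree H i) + (\<Sum>j = 0..<?n. adj H i j * w j / w i) \<le> c"
    proof (cases "i = h")
      case True
      have "adj H h h = 0" using irr by (simp add: adj_def)
      hence "real (degree H i) + (\<Sum>j = 0..<?n. adj H i j * w j / w i) = real (degree H h) * (1 + e)"
        using True ws by (simp add: w_def algebra_simps)
      also have "\<dots> \<le> (real ?n - 2) * (1 + e)" using dh epos by (intro mult_right_mono) auto
      also have "\<dots> \<le> c" unfolding c_def e_def by (rule hub_arith) (use n24 in simp)
      finally show ?thesis .
    next
      case False
      have d6: "real (degree H i) \<le> 6" using small[OF i False] by simp
      have "real (degree H i) + (\<Sum>j = 0..<?n. adj H i j * w j / w i)
          = real (degree H i) + (e * real (degree H i) + (1 - e) * adj H i h) / e"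
        using ws False by (simp add: w_def)
      also have "\<dots> = 2 * real (degree H i) + adj H i h * (1 / e - 1)"
        using epos by (simp add: field_simps)
      also have "\<dots> \<le> 2 * 6 + 1 * (1 / e - 1)"
        using d6 adj_le1[of H i h] ie c12 by (intro add_mono mult_right_mono) auto
      also have "\<dots> = c" using ie by simp
      finally show ?thesis .
    qed
  qed simp
  also have "\<dots> = c * (x \<bullet> x)" using x by (simp add: sq_form sum_distrib_left)
  finally show ?thesis unfolding c_def .
qed

lemma H_two:
  assumes sym: "\<And>i j. snd H i j = snd H j i" and irr: "\<And>i. \<not> snd H i i"
    and u: "u < fst H" and v: "v < fst H" and uv: "u \<noteq> v"
    and du: "degree H u \<ge> 7" and dv: "degree H v \<ge> 7"
    and x: "x \<in> carrier_vec (fst H)" and xp: "x \<bullet> x > 0"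
    and supp: "\<forall>j < fst H. j \<noteq> u \<longrightarrow> j \<noteq> v \<longrightarrow> x $ j = 0"
  shows "x \<bullet> (Q_matrix H *\<^sub>v x) > 5 * (x \<bullet> x)"
proof -
  let ?n = "fst H"
  have s1: "(\<Sum>i = 0..<?n. real (degree H i) * (x $ i)^2) = real (degree H u) * (x $ u)^2 + real (degree H v) * (x $ v)^2"
    by (rule sum_two) (use u v uv supp in auto)
  have inner: "\<And>i. (\<Sum>j = 0..<?n. adj H i j * x $ i * x $ j) = adj H i u * x $ i * x $ u + adj H i v * x $ i * x $ v"
    by (rule sum_two) (use u v uv supp in auto)
  have s2: "(\<Sum>i = 0..<?n. \<Sum>j = 0..<?n. adj H i j * x $ i * x $ j)
     = (adj H u u * x $ u * x $ u + adj H u v * x $ u * x $ v) + (adj H v u * x $ v * x $ u + adj H v v * x $ v * x $ v)"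
    unfolding inner by (rule sum_two) (use u v uv supp in auto)
  have auu: "adj H u u = 0" "adj H v v = 0" using irr by (auto simp: adj_def)
  have avu: "adj H v u = adj H u v" using sym by (simp add: adj_def)
  have s3: "x \<bullet> x = (x $ u)^2 + (x $ v)^2"
    unfolding sq_form[OF x] by (rule sum_two) (use u v uv supp in auto)
  have cross: "2 * adj H u v * x $ u * x $ v \<ge> - ((x $ u)^2 + (x $ v)^2)"
  proof (cases "snd H u v")
    case True
    have "0 \<le> (x $ u + x $ v)^2" by simp
    thus ?thesis using True by (simp add: adj_def power2_eq_square algebra_simps)
  next
    case False thus ?thesis by (simp add: adj_def)
  qed
  have "x \<bullet> (Q_matrix H *\<^sub>v x) = real (degree H u) * (x $ u)^2 + real (degree H v) * (x $ v)^2 + 2 * adj H u v * x $ u * x $ v"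
    unfolding Q_form[OF x] s1 s2 auu avu by (simp add: algebra_simps)
  also have "\<dots> \<ge> 7 * (x $ u)^2 + 7 * (x $ v)^2 - ((x $ u)^2 + (x $ v)^2)"
  proof -
    have a1: "real (degree H u) * (x $ u)^2 \<ge> 7 * (x $ u)^2" using du by (intro mult_right_mono) auto
    have a2: "real (degree H v) * (x $ v)^2 \<ge> 7 * (x $ v)^2" using dv by (intro mult_right_mono) auto
    show ?thesis using a1 a2 cross by linarith
  qed
  finally show ?thesis using s3 xp by simp
qed




definition symg :: "graph \<Rightarrow> bool" where "symg G \<longleftrightarrow> (\<forall>i j. snd G i j = snd G j i)"
definition irrg :: "graph \<Rightarrow> bool" where "irrg G \<longleftrightarrow> (\<forall>i. \<not> snd G i i)"
definition degok :: "graph \<Rightarrow> bool" where "degok G \<longleftrightarrow> (\<forall>i < fst G. degree G i \<in> {1,2})"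

lemma disj_union_fst[simp]: "fst (disj_union G1 G2) = fst G1 + fst G2"
  by (simp add: disj_union_def)

lemma disj_union_degree:
  assumes i: "i < fst G1 + fst G2"
  shows "degree (disj_union G1 G2) i = (if i < fst G1 then degree G1 i else degree G2 (i - fst G1))"
proof (cases "i < fst G1")
  case True
  have "{j. j < fst G1 + fst G2 \<and> snd (disj_union G1 G2) i j} = {j. j < fst G1 \<and> snd G1 i j}"
    using True by (auto simp: disj_union_def)
  thus ?thesis using True by (simp add: degree_def)
next
  case False
  let ?n1 = "fst G1"
  have "{j. j < fst G1 + fst G2 \<and> snd (disj_union G1 G2) i j} = (\<lambda>j. j + ?n1) ` {j. j < fst G2 \<and> snd G2 (i - ?n1) j}"
  proof (rule equalityI; rule subsetI)
    fix j assume "j \<in> {j. j < fst G1 + fst G2 \<and> snd (disj_union G1 G2) i j}"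
    hence j: "j < fst G1 + fst G2" "?n1 \<le> j" "snd G2 (i - ?n1) (j - ?n1)" using False by (auto simp: disj_union_def)
    thus "j \<in> (\<lambda>j. j + ?n1) ` {j. j < fst G2 \<and> snd G2 (i - ?n1) j}"
      by (intro image_eqI[of _ _ "j - ?n1"]) auto
  next
    fix j assume "j \<in> (\<lambda>j. j + ?n1) ` {j. j < fst G2 \<and> snd G2 (i - ?n1) j}"
    thus "j \<in> {j. j < fst G1 + fst G2 \<and> snd (disj_union G1 G2) i j}"
      using False by (auto simp: disj_union_def)
  qed
  moreover have "inj (\<lambda>j. j + ?n1)" by (auto intro: injI)
  ultimately show ?thesis using False by (simp add: degree_def card_image inj_on_def)
qed

lemma disj_union_sym: "symg G1 \<Longrightarrow> symg G2 \<Longrightarrow> symg (disj_union G1 G2)"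
  by (auto simp: symg_def disj_union_def)

lemma disj_union_irr: "irrg G1 \<Longrightarrow> irrg G2 \<Longrightarrow> irrg (disj_union G1 G2)"
  by (auto simp: irrg_def disj_union_def)

lemma disj_union_degok: "degok G1 \<Longrightarrow> degok G2 \<Longrightarrow> degok (disj_union G1 G2)"
  unfolding degok_def
proof (intro allI impI)
  fix i assume d1: "\<forall>i<fst G1. degree G1 i \<in> {1, 2}" and d2: "\<forall>i<fst G2. degree G2 i \<in> {1, 2}"
    and i: "i < fst (disj_union G1 G2)"
  show "degree (disj_union G1 G2) i \<in> {1, 2}"
    using i d1 d2 by (auto simp: disj_union_degree)
qed

lemma union_list_props:
  assumes "\<And>G. G \<in> set Gs \<Longrightarrow> symg G \<and> irrg G \<and> degok G"
  shows "symg (union_list Gs) \<and> irrg (union_list Gs) \<and> degok (union_list Gs) \<and>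
         fst (union_list Gs) = sum_list (map fst Gs)"
  using assms
proof (induction Gs)
  case Nil
  show ?case by (simp add: union_list_def empty_graph_def symg_def irrg_def degok_def)
next
  case (Cons G Gs)
  have "union_list (G # Gs) = disj_union G (union_list Gs)" by (simp add: union_list_def)
  thus ?case using Cons by (simp add: disj_union_sym disj_union_irr disj_union_degok)
qed

lemma cycle_props:
  assumes s: "s \<ge> 3"
  shows "symg (cycle_graph s) \<and> irrg (cycle_graph s) \<and> degok (cycle_graph s) \<and> fst (cycle_graph s) = s"
proof -
  have sym: "symg (cycle_graph s)" by (auto simp: symg_def cycle_graph_def)
  have irr: "irrg (cycle_graph s)"
  proof -
    have "\<not> (i = (i + 1) mod s)" if "i < s" for i
      using that s by (cases "i + 1 = s") auto
    thus ?thesis by (auto simp: irrg_def cycle_graph_def)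
  qed
  have deg: "degree (cycle_graph s) i = 2" if i: "i < s" for i
  proof -
    define a where "a = (if i + 1 = s then 0 else i + 1)"
    define b where "b = (if i = 0 then s - 1 else i - 1)"
    have "{j. j < s \<and> snd (cycle_graph s) i j} = {a, b}"
    proof (rule equalityI; rule subsetI)
      fix j assume "j \<in> {j. j < s \<and> snd (cycle_graph s) i j}"
      hence j: "j < s" and "j = (i + 1) mod s \<or> i = (j + 1) mod s" by (auto simp: cycle_graph_def)
      thus "j \<in> {a, b}"
        using i by (cases "i + 1 = s"; cases "j + 1 = s") (auto simp: a_def b_def)
    next
      fix j assume "j \<in> {a, b}"
      thus "j \<in> {j. j < s \<and> snd (cycle_graph s) i j}"
        using i s by (cases "i + 1 = s"; cases "i = 0") (auto simp: a_def b_def cycle_graph_def)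
    qed
    moreover have "a \<noteq> b" using i s by (auto simp: a_def b_def)
    ultimately show ?thesis by (simp add: degree_def cycle_graph_def)
  qed
  have "degok (cycle_graph s)" unfolding degok_def using deg by (simp add: cycle_graph_def)
  thus ?thesis using sym irr by (simp add: cycle_graph_def)
qed

lemma K2_props: "symg K2 \<and> irrg K2 \<and> degok K2 \<and> fst K2 = 2"
proof -
  have "degree K2 i = 1" if "i < 2" for i
  proof -
    have "{j. j < 2 \<and> snd K2 i j} = {1 - i}" using that by (cases "i = 0") (auto simp: K2_def)
    thus ?thesis by (simp add: degree_def K2_def)
  qed
  thus ?thesis by (auto simp: symg_def irrg_def degok_def K2_def)
qed


lemma join_fst[simp]: "fst (join_K1 U) = Suc (fst U)"
  by (simp add: join_K1_def)

lemma join_sym: "symg U \<Longrightarrow> symg (join_K1 U)"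
  by (auto simp: symg_def join_K1_def)

lemma join_irr: "irrg U \<Longrightarrow> irrg (join_K1 U)"
  by (auto simp: irrg_def join_K1_def)

lemma join_deg0: "degree (join_K1 U) 0 = fst U"
proof -
  have "{j. j < Suc (fst U) \<and> snd (join_K1 U) 0 j} = {1..fst U}" by (auto simp: join_K1_def)
  thus ?thesis by (simp add: degree_def)
qed

lemma join_degS:
  assumes k: "k < fst U"
  shows "degree (join_K1 U) (Suc k) = Suc (degree U k)"
proof -
  have "{j. j < Suc (fst U) \<and> snd (join_K1 U) (Suc k) j} = insert 0 (Suc ` {j. j < fst U \<and> snd U k j})"
  proof (rule equalityI; rule subsetI)
    fix j assume j: "j \<in> {j. j < Suc (fst U) \<and> snd (join_K1 U) (Suc k) j}"
    show "j \<in> insert 0 (Suc ` {j. j < fst U \<and> snd U k j})"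
    proof (cases j)
      case (Suc j') thus ?thesis using j by (auto simp: join_K1_def)
    qed simp
  next
    fix j assume "j \<in> insert 0 (Suc ` {j. j < fst U \<and> snd U k j})"
    thus "j \<in> {j. j < Suc (fst U) \<and> snd (join_K1 U) (Suc k) j}" using k by (auto simp: join_K1_def)
  qed
  moreover have "0 \<notin> Suc ` {j. j < fst U \<and> snd U k j}" by auto
  ultimately show ?thesis by (simp add: degree_def card_image)
qed

lemma join_adjSS: "adj (join_K1 U) (Suc k) (Suc l) = adj U k l"
  by (simp add: adj_def join_K1_def)

lemma join_adj0: "l < fst U \<Longrightarrow> adj (join_K1 U) 0 (Suc l) = 1"
  "l < fst U \<Longrightarrow> adj (join_K1 U) (Suc l) 0 = 1" "adj (join_K1 U) 0 0 = 0"
  by (auto simp: adj_def join_K1_def)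

lemma G_hyper:
  assumes sym: "symg U" and dok: "degok U"
    and x: "x \<in> carrier_vec (fst (join_K1 U))" and x0: "x $ 0 = 0"
  shows "x \<bullet> (Q_matrix (join_K1 U) *\<^sub>v x) \<le> 5 * (x \<bullet> x)"
proof -
  let ?G = "join_K1 U" let ?m = "fst U"
  define y where "y = (\<lambda>k. x $ Suc k)"
  have s1: "(\<Sum>i = 0..<fst ?G. real (degree ?G i) * (x $ i)^2) = (\<Sum>k = 0..<?m. (1 + real (degree U k)) * (y k)^2)"
    unfolding join_fst sum.atLeast0_lessThan_Suc_shift by (simp add: x0 y_def join_degS)
  have s2: "(\<Sum>i = 0..<fst ?G. \<Sum>j = 0..<fst ?G. adj ?G i j * x $ i * x $ j) = (\<Sum>k = 0..<?m. \<Sum>l = 0..<?m. adj U k l * y k * y l)"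
    unfolding join_fst sum.atLeast0_lessThan_Suc_shift by (simp add: x0 y_def join_adjSS)
  have "(\<Sum>k = 0..<?m. \<Sum>l = 0..<?m. adj U k l * y k * y l) \<le> (\<Sum>k = 0..<?m. (\<Sum>l = 0..<?m. adj U k l * 1 / 1) * (y k)^2)"
    by (rule weighted_bound[where w = "\<lambda>_. 1"]) (use sym in \<open>auto simp: adj_def symg_def\<close>)
  also have "\<dots> = (\<Sum>k = 0..<?m. real (degree U k) * (y k)^2)" by (simp add: degree_sum)
  finally have s3: "(\<Sum>k = 0..<?m. \<Sum>l = 0..<?m. adj U k l * y k * y l) \<le> (\<Sum>k = 0..<?m. real (degree U k) * (y k)^2)" .
  have "x \<bullet> (Q_matrix ?G *\<^sub>v x) \<le> (\<Sum>k = 0..<?m. (1 + real (degree U k)) * (y k)^2) + (\<Sum>k = 0..<?m. real (degree U k) * (y k)^2)"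
    unfolding Q_form[OF x] s1 s2 using s3 by linarith
  also have "\<dots> = (\<Sum>k = 0..<?m. (1 + 2 * real (degree U k)) * (y k)^2)"
    by (simp add: sum.distrib[symmetric] algebra_simps)
  also have "\<dots> \<le> (\<Sum>k = 0..<?m. 5 * (y k)^2)"
  proof (rule sum_mono, rule mult_right_mono)
    fix k assume "k \<in> {0..<?m}"
    hence "degree U k \<in> {1,2}" using dok by (auto simp: degok_def)
    thus "1 + 2 * real (degree U k) \<le> 5" by auto
  qed simp
  also have "\<dots> = 5 * (x \<bullet> x)"
    unfolding sq_form[OF x] join_fst sum.atLeast0_lessThan_Suc_shift by (simp add: x0 y_def sum_distrib_left)
  finally show ?thesis .
qed

lemma G_lower:
  assumes dok: "degok U"
  defines "x \<equiv> vec (Suc (fst U)) (\<lambda>i. if i = 0 then real (fst U) else 1)"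
  shows "x \<in> carrier_vec (fst (join_K1 U))"
    and "x \<bullet> (Q_matrix (join_K1 U) *\<^sub>v x) \<ge> real (fst (join_K1 U)) * (x \<bullet> x)"
    and "x \<bullet> x = real (fst U) ^ 2 + real (fst U)"
proof -
  let ?G = "join_K1 U" let ?m = "fst U"
  show x: "x \<in> carrier_vec (fst ?G)" by (simp add: x_def)
  have x0: "x $ 0 = real ?m" and xS: "\<And>k. k < ?m \<Longrightarrow> x $ Suc k = 1" by (auto simp: x_def)
  show xx: "x \<bullet> x = real ?m ^ 2 + real ?m"
    unfolding sq_form[OF x] join_fst sum.atLeast0_lessThan_Suc_shift by (simp add: x0 xS power2_eq_square)
  have s1: "(\<Sum>i = 0..<fst ?G. real (degree ?G i) * (x $ i)^2) = real ?m ^ 3 + (\<Sum>k = 0..<?m. 1 + real (degree U k))"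
    unfolding join_fst sum.atLeast0_lessThan_Suc_shift by (simp add: x0 xS join_degS join_deg0 power2_eq_square power3_eq_cube)
  have s1': "(\<Sum>k = 0..<?m. 1 + real (degree U k)) \<ge> (\<Sum>k = 0..<?m. 1)"
    by (rule sum_mono) simp
  have row0: "adj ?G 0 0 * x $ 0 * x $ 0 + (\<Sum>l = 0..<?m. adj ?G 0 (Suc l) * x $ 0 * x $ Suc l) = real ?m * real ?m"
    by (simp add: x0 xS join_adj0)
  have rowS: "adj ?G (Suc k) 0 * x $ Suc k * x $ 0 + (\<Sum>l = 0..<?m. adj ?G (Suc k) (Suc l) * x $ Suc k * x $ Suc l) \<ge> real ?m"
    if k: "k < ?m" for k
  proof -
    have "adj ?G (Suc k) 0 * x $ Suc k * x $ 0 + (\<Sum>l = 0..<?m. adj ?G (Suc k) (Suc l) * x $ Suc k * x $ Suc l)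
        = real ?m + (\<Sum>l = 0..<?m. adj U k l)"
      using k by (simp add: x0 xS join_adj0 join_adjSS)
    moreover have "(\<Sum>l = 0..<?m. adj U k l) \<ge> 0" by (rule sum_nonneg) (simp add: adj_nonneg)
    ultimately show ?thesis by simp
  qed
  have "(\<Sum>i = 0..<fst ?G. \<Sum>j = 0..<fst ?G. adj ?G i j * x $ i * x $ j)
      = (adj ?G 0 0 * x $ 0 * x $ 0 + (\<Sum>l = 0..<?m. adj ?G 0 (Suc l) * x $ 0 * x $ Suc l))
        + (\<Sum>k = 0..<?m. adj ?G (Suc k) 0 * x $ Suc k * x $ 0 + (\<Sum>l = 0..<?m. adj ?G (Suc k) (Suc l) * x $ Suc k * x $ Suc l))"
    unfolding join_fst sum.atLeast0_lessThan_Suc_shift by (simp add: o_def)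
  also have "\<dots> \<ge> real ?m * real ?m + (\<Sum>k = 0..<?m. real ?m)"
    unfolding row0 using rowS by (intro add_left_mono sum_mono) auto
  finally have s2: "(\<Sum>i = 0..<fst ?G. \<Sum>j = 0..<fst ?G. adj ?G i j * x $ i * x $ j) \<ge> 2 * real ?m * real ?m"
    by simp
  have "x \<bullet> (Q_matrix ?G *\<^sub>v x) \<ge> real ?m ^ 3 + real ?m + 2 * real ?m * real ?m"
    unfolding Q_form[OF x] s1 using s1' s2 by simp
  moreover have "real (fst ?G) * (x \<bullet> x) = real ?m ^ 3 + real ?m + 2 * real ?m * real ?m"
    unfolding xx by (simp add: algebra_simps power2_eq_square power3_eq_cube)
  ultimately show "x \<bullet> (Q_matrix ?G *\<^sub>v x) \<ge> real (fst ?G) * (x \<bullet> x)" by simp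
qed




lemma sum_mset_map_upt_gen: "sum_mset (mset (map f [0..<n])) = (\<Sum>i = 0..<n. (f i :: 'a :: comm_monoid_add))"
  by (induction n) (auto simp: add.commute)

lemma mset_F:
  "sum_mset (image_mset (\<lambda>x. (int x - 2) * (int x - 3)) M) =
   int (sum_mset (image_mset (\<lambda>x. x^2) M)) - 5 * int (sum_mset M) + 6 * int (size M)"
  by (induction M) (auto simp: algebra_simps power2_eq_square)

lemma mset_sum_nonneg: "(\<And>x. x \<in># M \<Longrightarrow> 0 \<le> (f x :: int)) \<Longrightarrow> 0 \<le> sum_mset (image_mset f M)"
  by (induction M) auto

lemma mset_sum_zero: "(\<And>x. x \<in># M \<Longrightarrow> (f x :: int) = 0) \<Longrightarrow> sum_mset (image_mset f M) = 0"
  by (induction M) auto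

lemma mset_nonneg_zero:
  fixes f :: "nat \<Rightarrow> int"
  assumes "\<And>x. x \<in># M \<Longrightarrow> 0 \<le> f x" and "sum_mset (image_mset f M) = 0"
  shows "\<And>x. x \<in># M \<Longrightarrow> f x = 0"
  using assms
proof (induction M)
  case (add a M)
  have fa: "0 \<le> f a" using add.prems(2) by simp
  have sM: "0 \<le> sum_mset (image_mset f M)" using add.prems(2) by (intro mset_sum_nonneg) auto
  have "f a + sum_mset (image_mset f M) = 0" using add.prems(3) by simp
  hence "f a = 0" "sum_mset (image_mset f M) = 0" using fa sM by linarith+
  thus ?case using add by auto
qed simp

lemma mset_23_facts:
  assumes "set_mset M \<subseteq> {2::nat, 3}"
  shows "sum_mset M = 2 * size M + count M 3 \<and> size M = count M 2 + count M 3"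
  using assms by (induction M) auto

lemma mset_23:
  assumes A: "set_mset A \<subseteq> {2::nat, 3}" and B: "set_mset B \<subseteq> {2, 3}"
    and sz: "size A = size B" and sm: "sum_mset A = sum_mset B"
  shows "A = B"
proof (rule multiset_eqI)
  fix x
  from mset_23_facts[OF A] mset_23_facts[OF B] sz sm
  have c3: "count A 3 = count B 3" and c2: "count A 2 = count B 2" by auto
  show "count A x = count B x"
  proof (cases "x = 2 \<or> x = 3")
    case True thus ?thesis using c2 c3 by auto
  next
    case False
    hence "x \<notin># A" "x \<notin># B" using A B by auto
    thus ?thesis by (simp add: not_in_iff)
  qed
qed

lemma int_quad_nonneg: "0 \<le> (int x - 2) * (int x - 3)"
proof (cases "x \<le> 2")
  case True thus ?thesis by (intro mult_nonpos_nonpos) auto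
next
  case False thus ?thesis by (intro mult_nonneg_nonneg) auto
qed

lemma final_mset:
  assumes RG: "set_mset RG \<subseteq> {2::nat, 3}"
    and sz: "size RH = size RG" and sm: "sum_mset RH = sum_mset RG"
    and sq: "sum_mset (image_mset (\<lambda>x. x^2) RH) = sum_mset (image_mset (\<lambda>x. x^2) RG)"
  shows "RH = RG"
proof -
  have "\<And>x. x \<in># RG \<Longrightarrow> (int x - 2) * (int x - 3) = 0" using RG by auto
  hence FG: "sum_mset (image_mset (\<lambda>x. (int x - 2) * (int x - 3)) RG) = 0"
    by (rule mset_sum_zero)
  have "sum_mset (image_mset (\<lambda>x. (int x - 2) * (int x - 3)) RH) = 0"
    using FG unfolding mset_F sz sm sq .
  hence "\<And>x. x \<in># RH \<Longrightarrow> (int x - 2) * (int x - 3) = 0"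
    using mset_nonneg_zero[of RH "\<lambda>x. (int x - 2) * (int x - 3)"] int_quad_nonneg by blast
  hence RH: "set_mset RH \<subseteq> {2, 3}" by auto
  show ?thesis by (rule mset_23[OF RH RG sz sm])
qed




lemma sum_list_ge3: "(\<forall>s\<in>set ss. (3::nat) \<le> s) \<Longrightarrow> 3 * length ss \<le> sum_list ss"
  by (induction ss) auto

lemma simple_deg_le:
  assumes "simple_graph H" and i: "i < fst H"
  shows "degree H i \<le> fst H - 1"
proof -
  have "{j. j < fst H \<and> snd H i j} \<subseteq> {0..<fst H} - {i}"
    using assms(1) unfolding simple_graph_def by auto
  hence "card {j. j < fst H \<and> snd H i j} \<le> card ({0..<fst H} - {i})"
    by (intro card_mono) auto
  also have "\<dots> = fst H - 1" using i by simp
  finally show ?thesis by (simp add: degree_def)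
qed

lemma real_sum_eq_nat: "(\<Sum>i = 0..<n. real (f i)) = (\<Sum>i = 0..<n. real (g i)) \<Longrightarrow> (\<Sum>i = 0..<n. f i) = (\<Sum>i = 0..<n. (g i :: nat))"
  by (metis of_nat_eq_iff of_nat_sum)

theorem lemma5p3:
  fixes t q n :: nat and ss :: "nat list" and G H :: graph
  assumes "t \<ge> 2" and "q \<ge> 1" and "length ss = t" and "\<forall>s \<in> set ss. s \<ge> 3"
    and "G = join_K1 (union_list (map cycle_graph ss @ replicate q K2))"
    and "n = fst G"
    and "simple_graph H"
    and "Q_spectrum H = Q_spectrum G"
    and "n \<ge> 52 \<or> q \<ge> 12"
  shows "degree_mset H = degree_mset G"
proof -
  define Gs where "Gs = map cycle_graph ss @ replicate q K2"
  define U where "U = union_list Gs"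
  have GU: "G = join_K1 U" using assms(5) by (simp add: U_def Gs_def)
  have props: "\<And>g. g \<in> set Gs \<Longrightarrow> symg g \<and> irrg g \<and> degok g"
    using cycle_props K2_props assms(4) by (auto simp: Gs_def)
  have Uprops: "symg U \<and> irrg U \<and> degok U \<and> fst U = sum_list (map fst Gs)"
    unfolding U_def by (rule union_list_props[OF props])
  have symU: "symg U" and irrU: "irrg U" and dokU: "degok U" using Uprops by auto
  have "map fst (map cycle_graph ss) = ss"
    unfolding map_map by (rule map_idI) (use assms(4) cycle_props in auto)
  hence mapfst: "map fst Gs = ss @ replicate q 2" using K2_props by (simp add: Gs_def)
  define m where "m = fst U"
  have m: "m = sum_list ss + 2 * q" using Uprops mapfst by (simp add: m_def sum_list_replicate)
  have nm: "n = Suc m" using assms(6) by (simp add: GU m_def)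
  have "3 * length ss \<le> sum_list ss" by (rule sum_list_ge3[OF assms(4)])
  hence n31: "31 \<le> n" using assms(1,3,9) nm m by linarith
  have symH: "\<And>i j. snd H i j = snd H j i" using assms(7) unfolding simple_graph_def by blast
  have irrH: "\<And>i. \<not> snd H i i" using assms(7) unfolding simple_graph_def by blast
  have symG: "\<And>i j. snd G i j = snd G j i" using join_sym[OF symU] unfolding GU symg_def by blast
  have irrG: "\<And>i. \<not> snd G i i" using join_irr[OF irrU] unfolding GU irrg_def by blast
  obtain UG DG where sdG: "sdec (fst G) (Q_matrix G) UG DG"
    using sdec_exists[OF Q_carrier Q_sym[OF symG]] by blast
  obtain UH DH where sdH: "sdec (fst H) (Q_matrix H) UH DH"
    using sdec_exists[OF Q_carrier Q_sym[OF symH]] by blast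
  have spec: "proots (char_poly (Q_matrix H)) = proots (char_poly (Q_matrix G))"
    using assms(8) by (simp add: Q_spectrum_def)
  have nH: "fst H = n" using spec_size[OF sdG] spec_size[OF sdH] spec assms(6) by simp
  have nG: "fst G = n" using assms(6) by simp
  have tr: "(\<Sum>i = 0..<n. real (degree H i)) = (\<Sum>i = 0..<n. real (degree G i))"
    using spec_sum[OF sdG] spec_sum[OF sdH] spec Q_trace[of H, OF irrH] Q_trace[of G, OF irrG] nH nG by simp
  have sq: "(\<Sum>i = 0..<n. (real (degree H i))^2) = (\<Sum>i = 0..<n. (real (degree G i))^2)"
    using spec_sum_sq[OF sdG] spec_sum_sq[OF sdH] spec Q_sq_trace[of H, OF symH irrH] Q_sq_trace[of G, OF symG irrG] nH nG tr
    by simp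
  obtain amax where amax: "amax \<in># proots (char_poly (Q_matrix G))" "amax \<ge> real n"
  proof -
    note GL = G_lower[OF dokU]
    define x where "x = vec (Suc (fst U)) (\<lambda>i. if i = 0 then real (fst U) else 1)"
    have x: "x \<in> carrier_vec (fst G)" using GL(1) unfolding x_def GU .
    have xQ: "x \<bullet> (Q_matrix G *\<^sub>v x) \<ge> real (fst G) * (x \<bullet> x)" using GL(2) unfolding x_def GU .
    have pos: "0 < real (fst U)" using n31 nm unfolding m_def by simp
    have "0 \<le> (real (fst U))^2" by simp
    hence xx: "x \<bullet> x > 0" using GL(3) pos unfolding x_def by linarith
    from spec_lower[OF sdG x xx xQ] that nG show thesis by auto
  qed
  have small: "size (filter_mset (\<lambda>a. 5 < a) (proots (char_poly (Q_matrix G)))) \<le> 1"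
  proof (rule spec_hyper[OF sdG])
    show "0 < fst G" using nG n31 by simp
    fix x :: "real vec" assume x: "x \<in> carrier_vec (fst G)" and x0: "x $ 0 = 0"
    show "x \<bullet> (Q_matrix G *\<^sub>v x) \<le> 5 * (x \<bullet> x)"
      using G_hyper[OF symU dokU _ x0] x unfolding GU by simp
  qed
  have smallH: "size (filter_mset (\<lambda>a. 5 < a) (proots (char_poly (Q_matrix H)))) \<le> 1"
    using small spec by simp
  have one7: "u = v" if u: "u < n" and v: "v < n" and du: "7 \<le> degree H u" and dv: "7 \<le> degree H v" for u v
  proof (rule ccontr)
    assume uv: "u \<noteq> v"
    obtain x where x: "x \<in> carrier_vec (fst H)" and xx: "x \<bullet> x > 0"
      and supp: "\<forall>j<fst H. j \<noteq> u \<longrightarrow> j \<noteq> v \<longrightarrow> x $ j = 0" and le5: "x \<bullet> (Q_matrix H *\<^sub>v x) \<le> 5 * (x \<bullet> x)"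
      using spec_two[OF sdH smallH, of u v] u v uv nH by auto
    have "x \<bullet> (Q_matrix H *\<^sub>v x) > 5 * (x \<bullet> x)"
      by (rule H_two[OF symH irrH _ _ uv du dv x xx supp]) (use u v nH in auto)
    with le5 show False by simp
  qed
  have amaxH: "amax \<in># proots (char_poly (Q_matrix H))" using amax(1) spec by simp
  have hub: "\<exists>h<n. degree H h = n - 1"
  proof (rule ccontr)
    assume nh: "\<not> ?thesis"
    have le: "degree H i \<le> n - 2" if i: "i < n" for i
      using simple_deg_le[OF assms(7), of i] nh i nH by force
    show False
    proof (cases "\<exists>h<n. 7 \<le> degree H h")
      case True
      then obtain h where h: "h < n" "7 \<le> degree H h" by blast
      have others: "degree H i \<le> 6" if "i < n" "i \<noteq> h" for i
        using one7[of i h] h that by force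
      have bnd: "x \<bullet> (Q_matrix H *\<^sub>v x) \<le> (real (fst H) - 1/4) * (x \<bullet> x)" if x: "x \<in> carrier_vec (fst H)" for x
      proof (rule H_hub[OF symH irrH _ _ _ _ x])
        show "h < fst H" using h nH by simp
        show "real (degree H h) \<le> real (fst H) - 2" using le[OF h(1)] nH n31 by linarith
        show "\<And>i. i < fst H \<Longrightarrow> i \<noteq> h \<Longrightarrow> degree H i \<le> 6" using others nH by simp
        show "24 \<le> fst H" using nH n31 by simp
      qed
      have "amax \<le> real (fst H) - 1/4" by (rule spec_upper[OF sdH bnd amaxH])
      with amax(2) nH show False by simp
    next
      case False
      hence "\<And>i. i < fst H \<Longrightarrow> degree H i \<le> 6" using nH by force
      hence "\<And>x. x \<in> carrier_vec (fst H) \<Longrightarrow> x \<bullet> (Q_matrix H *\<^sub>v x) \<le> 12 * (x \<bullet> x)"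
        using H_all_small[OF symH] by blast
      hence "amax \<le> 12" by (rule spec_upper[OF sdH _ amaxH])
      with amax(2) n31 show False by simp
    qed
  qed
  then obtain h where h: "h < n" "degree H h = m" using nm by auto
  define RG where "RG = mset (map (degree G) [1..<n])"
  have dG: "degree_mset G = add_mset m RG"
  proof -
    have "[0..<n] = 0 # [1..<n]" using nm by (simp add: upt_conv_Cons)
    moreover have "degree G 0 = m" unfolding GU m_def by (rule join_deg0)
    ultimately show ?thesis by (simp add: degree_mset_def RG_def nG)
  qed
  have RG23: "set_mset RG \<subseteq> {2, 3}"
  proof
    fix d assume "d \<in># RG"
    then obtain i where i: "i \<in> {1..<n}" "d = degree G i" by (auto simp: RG_def)
    then obtain k where k: "i = Suc k" "k < m" using nm by (cases i) auto
    have "degree G i = Suc (degree U k)" unfolding GU k(1) by (rule join_degS) (use k m_def in simp)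
    moreover have "degree U k \<in> {1,2}" using dokU k by (simp add: degok_def m_def)
    ultimately show "d \<in> {2,3}" using i by auto
  qed
  have mH: "m \<in># degree_mset H" using h nH by (auto simp: degree_mset_def)
  define RH where "RH = degree_mset H - {#m#}"
  have dH: "degree_mset H = add_mset m RH" unfolding RH_def using mH by simp
  have szG: "size (degree_mset G) = n" by (simp add: degree_mset_def nG)
  have szH: "size (degree_mset H) = n" by (simp add: degree_mset_def nH)
  have sz: "size RH = size RG" using szG szH dG dH by simp
  have smG: "sum_mset (degree_mset G) = (\<Sum>i = 0..<n. degree G i)"
    unfolding degree_mset_def nG by (rule sum_mset_map_upt_gen)
  have smH: "sum_mset (degree_mset H) = (\<Sum>i = 0..<n. degree H i)"
    unfolding degree_mset_def nH by (rule sum_mset_map_upt_gen)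
  have "(\<Sum>i = 0..<n. degree H i) = (\<Sum>i = 0..<n. degree G i)" by (rule real_sum_eq_nat[OF tr])
  hence sm: "sum_mset RH = sum_mset RG" using smG smH dG dH by simp
  have sqG: "sum_mset (image_mset (\<lambda>x. x^2) (degree_mset G)) = (\<Sum>i = 0..<n. (degree G i)^2)"
    unfolding degree_mset_def nG mset_map[symmetric] map_map o_def by (rule sum_mset_map_upt_gen)
  have sqH: "sum_mset (image_mset (\<lambda>x. x^2) (degree_mset H)) = (\<Sum>i = 0..<n. (degree H i)^2)"
    unfolding degree_mset_def nH mset_map[symmetric] map_map o_def by (rule sum_mset_map_upt_gen)
  have "(\<Sum>i = 0..<n. (degree H i)^2) = (\<Sum>i = 0..<n. (degree G i)^2)"
    by (rule real_sum_eq_nat) (use sq in simp)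
  hence sqq: "sum_mset (image_mset (\<lambda>x. x^2) RH) = sum_mset (image_mset (\<lambda>x. x^2) RG)"
    using sqG sqH dG dH by simp
  have "RH = RG" by (rule final_mset[OF RG23 sz sm sqq])
  thus ?thesis using dG dH by simp
qed


end
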